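(* Let $\xi=(\xi_1,\xi_2)\in\mathfrak p$ and $X\in\mathrm{St}(n,k)$. Then $(\beta(t),\widehat\beta(t),B(t),C(t))$, $t\in I$, is an extrinsic rolling of $T_X\mathrm{St}(n,k)$ over $\mathrm{St}(n,k)$ with respect to the Euclidean metric, whose development curve $\widehat\beta$ is a geodesic, where $$\beta(t)=t(\xi_1X-X\xi_2),\qquad \widehat\beta(t)=e^{t\xi_1}Xe^{-t\xi_2},$$ $$B(t)=d_{(e^{t\xi_1},e^{t\xi_2})}(\iota_X\circ\pi)\circ d_{(I_n,I_k)}L_{(e^{t\xi_1},e^{t\xi_2})}\circ\exp\!\big(-\tfrac12t\,\mathrm{pr}_{\mathfrak p}\circ\mathrm{ad}_{\xi}\big)\circ\big(d_{(I_n,I_k)}(\iota_X\circ\pi)|_{\mathfrak p}\big)^{-1},$$ $$C(t)=\Phi_{(e^{t\xi_1},e^{t\xi_2})}\circ\exp\!\big(-t\,P_X^\perp\circ f_{(\xi_1,\xi_2)}\big).$$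
   Context: $\mathrm{St}(n,k)=\{Y\in\mathbb{R}^{n\times k}:Y^\top Y=I_k\}$ with metric $\langle V,W\rangle=2\operatorname{tr}(V^\top W)$ ("Euclidean metric"). $G=O(n)\times O(k)$ acts on $\mathbb{R}^{n\times k}$ by $\Phi_{(R,\theta)}(V)=RV\theta^\top$; $H$ is the stabilizer of $X$, $\pi\colon G\to G/H$, $\iota_X((R,\theta)H)=RX\theta^\top$, $L_g$ left translation. On $\mathfrak g=\mathfrak{so}(n)\times\mathfrak{so}(k)$: $\langle(\Omega_1,\Psi_1),(\Omega_2,\Psi_2)\rangle=-\operatorname{tr}(\Omega_1\Omega_2)+2\operatorname{tr}(\Psi_1\Psi_2)$, $\mathfrak h=\{(\Omega,\eta):\Omega X=X\eta\}$, $\mathfrak p=\mathfrak h^\perp$, $\mathrm{pr}_{\mathfrak p}(\Omega,\eta)=(XX^\top\Omega+\Omega XX^\top-2X\eta X^\top,\,X^\top\Omega X-\eta)$, $\mathrm{ad}_\xi Z=[\xi,Z]$; $d_{(I_n,I_k)}(\iota_X\circ\pi)|_{\mathfrak p}\colon(\Omega,\eta)\mapsto\Omega X-X\eta$ is a linear isometry onto $T_X\mathrm{St}(n,k)$ with inverse $V\mapsto(VX^\top-XV^\top,X^\top V)$. $T_Y\mathrm{St}(n,k)=\{V:Y^\top V+V^\top Y=0\}$, $N_Y\mathrm{St}(n,k)$ its Frobenius-orthogonal complement, $P_X^\perp(V)=\tfrac12X(X^\top V+V^\top X)$, $f_{(\xi_1,\xi_2)}(V)=\xi_1V-V\xi_2$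 (the operator $P_X^\perp\circ f_{(\xi_1,\xi_2)}$ acts on $N_X\mathrm{St}(n,k)$). $T_X\mathrm{St}(n,k)$ is viewed as a submanifold with tangent space $T_X\mathrm{St}(n,k)$ and normal space $N_X\mathrm{St}(n,k)$ at each point. An extrinsic rolling of $M$ over $\widehat M$ is a quadruple of curves $\alpha$ in $M$, $\widehat\alpha$ in $\widehat M$ and linear isometries $A(t)\colon T_{\alpha(t)}M\to T_{\widehat\alpha(t)}\widehat M$, $C(t)\colon N_{\alpha(t)}M\to N_{\widehat\alpha(t)}\widehat M$ with $\dot{\widehat\alpha}=A\dot\alpha$, $A(t)Z(t)$ parallel along $\widehat\alpha$ iff $Z$ parallel along $\alpha$, and $C(t)Z(t)$ normal parallel along $\widehat\alpha$ iff $Z$ normal parallel along $\alpha$ (normal component of $\tfrac{d}{dt}Z$ vanishes). *)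

theory Defs
  imports "HOL-Analysis.Analysis"
begin

text \<open>Matrices are real^'c^'r (rows 'r, columns 'c); 'n and 'k are the finite index
types of size n and k.  The Frobenius inner product is the built-in inner product.\<close>

fun mpow :: "real^'n^'n \<Rightarrow> nat \<Rightarrow> real^'n^'n" where
  "mpow A 0 = mat 1"
| "mpow A (Suc i) = A ** mpow A i"

definition mexp :: "real^'n^'n \<Rightarrow> real^'n^'n" where
  "mexp A = (\<Sum>i. (1 / fact i) *\<^sub>R mpow A i)"

definition op_exp :: "('a::real_normed_vector \<Rightarrow> 'a) \<Rightarrow> 'a \<Rightarrow> 'a" where
  "op_exp L v = (\<Sum>i. (1 / fact i) *\<^sub>R (L ^^ i) v)"

definition Stiefel :: "(real^'k^'n) set" where
  "Stiefel = {Y. transpose Y ** Y = mat 1}"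

definition tanSt :: "real^'k^'n \<Rightarrow> (real^'k^'n) set" where
  "tanSt Y = {V. transpose Y ** V + transpose V ** Y = 0}"

definition orth :: "('a::real_inner) set \<Rightarrow> 'a set" where
  "orth S = {v. \<forall>w\<in>S. v \<bullet> w = 0}"

definition norSt :: "real^'k^'n \<Rightarrow> (real^'k^'n) set" where
  "norSt Y = orth (tanSt Y)"

definition eucl_metric :: "real^'k^'n \<Rightarrow> real^'k^'n \<Rightarrow> real" where
  "eucl_metric V W = 2 * trace (transpose V ** W)"

definition lin_isom_on ::
  "(real^'k^'n \<Rightarrow> real^'k^'n) \<Rightarrow> (real^'k^'n) set \<Rightarrow> (real^'k^'n) set \<Rightarrow> bool" where
  "lin_isom_on A S S' \<longleftrightarrow>
     (\<forall>u\<in>S. \<forall>v\<in>S. A (u + v) = A u + A v) \<and>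
     (\<forall>c. \<forall>u\<in>S. A (c *\<^sub>R u) = c *\<^sub>R A u) \<and>
     A ` S = S' \<and>
     (\<forall>u\<in>S. \<forall>v\<in>S. eucl_metric (A u) (A v) = eucl_metric u v)"

text \<open>A submanifold is given by its point set and tangent-space map T; its normal
space at y is the Frobenius-orthogonal complement of T y.
Z is parallel along \<alpha> (Levi-Civita connection of the induced metric):
Z is a smooth tangent field whose derivative has vanishing tangential component.\<close>
definition parallel_along ::
  "(real^'k^'n \<Rightarrow> (real^'k^'n) set) \<Rightarrow> real set \<Rightarrow> (real \<Rightarrow> real^'k^'n)
     \<Rightarrow> (real \<Rightarrow> real^'k^'n) \<Rightarrow> bool" where
  "parallel_along T I \<alpha> Z \<longleftrightarrow>
     (\<exists>Z'. \<forall>t\<in>I. Z t \<in> T (\<alpha> t) \<and> (Z has_vector_derivative Z' t) (at t within I)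
                 \<and> Z' t \<in> orth (T (\<alpha> t)))"

definition normal_parallel_along ::
  "(real^'k^'n \<Rightarrow> (real^'k^'n) set) \<Rightarrow> real set \<Rightarrow> (real \<Rightarrow> real^'k^'n)
     \<Rightarrow> (real \<Rightarrow> real^'k^'n) \<Rightarrow> bool" where
  "normal_parallel_along T I \<alpha> Z \<longleftrightarrow>
     (\<exists>Z'. \<forall>t\<in>I. Z t \<in> orth (T (\<alpha> t)) \<and> (Z has_vector_derivative Z' t) (at t within I)
                 \<and> Z' t \<in> orth (orth (T (\<alpha> t))))"

definition extrinsic_rolling ::
  "(real^'k^'n) set \<Rightarrow> (real^'k^'n \<Rightarrow> (real^'k^'n) set) \<Rightarrow>
   (real^'k^'n) set \<Rightarrow> (real^'k^'n \<Rightarrow> (real^'k^'n) set) \<Rightarrow> real set \<Rightarrow>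
   (real \<Rightarrow> real^'k^'n) \<Rightarrow> (real \<Rightarrow> real^'k^'n) \<Rightarrow>
   (real \<Rightarrow> real^'k^'n \<Rightarrow> real^'k^'n) \<Rightarrow> (real \<Rightarrow> real^'k^'n \<Rightarrow> real^'k^'n) \<Rightarrow> bool" where
  "extrinsic_rolling M TM Mh TMh I \<alpha> \<alpha>h A C \<longleftrightarrow>
     (\<forall>t\<in>I. \<alpha> t \<in> M \<and> \<alpha>h t \<in> Mh) \<and>
     (\<forall>t\<in>I. lin_isom_on (A t) (TM (\<alpha> t)) (TMh (\<alpha>h t))) \<and>
     (\<forall>t\<in>I. lin_isom_on (C t) (orth (TM (\<alpha> t))) (orth (TMh (\<alpha>h t)))) \<and>
     (\<exists>\<alpha>' \<alpha>h'. \<forall>t\<in>I. (\<alpha> has_vector_derivative \<alpha>' t) (at t within I) \<and>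
                      (\<alpha>h has_vector_derivative \<alpha>h' t) (at t within I) \<and>
                      \<alpha>h' t = A t (\<alpha>' t)) \<and>
     (\<forall>Z. (\<forall>t\<in>I. Z t \<in> TM (\<alpha> t)) \<longrightarrow>
          (parallel_along TMh I \<alpha>h (\<lambda>t. A t (Z t)) \<longleftrightarrow> parallel_along TM I \<alpha> Z)) \<and>
     (\<forall>Z. (\<forall>t\<in>I. Z t \<in> orth (TM (\<alpha> t))) \<longrightarrow>
          (normal_parallel_along TMh I \<alpha>h (\<lambda>t. C t (Z t)) \<longleftrightarrow>
           normal_parallel_along TM I \<alpha> Z))"

definition geodesic_St :: "real set \<Rightarrow> (real \<Rightarrow> real^'k^'n) \<Rightarrow> bool" where
  "geodesic_St I \<gamma> \<longleftrightarrow> (\<forall>t\<in>I. \<gamma> t \<in> Stiefel) \<and>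
     (\<exists>\<gamma>' \<gamma>''. \<forall>t\<in>I. (\<gamma> has_vector_derivative \<gamma>' t) (at t within I) \<and>
                     (\<gamma>' has_vector_derivative \<gamma>'' t) (at t within I) \<and>
                     \<gamma>'' t \<in> orth (tanSt (\<gamma> t)))"

definition skew :: "(real^'n^'n) set" where
  "skew = {\<Omega>. transpose \<Omega> = - \<Omega>}"

definition g_inner :: "(real^'n^'n) \<times> (real^'k^'k) \<Rightarrow> (real^'n^'n) \<times> (real^'k^'k) \<Rightarrow> real" where
  "g_inner a b = - trace (fst a ** fst b) + 2 * trace (snd a ** snd b)"

definition hX :: "real^'k^'n \<Rightarrow> ((real^'n^'n) \<times> (real^'k^'k)) set" where
  "hX X = {(\<Omega>, \<eta>). \<Omega> \<in> skew \<and> \<eta> \<in> skew \<and> \<Omega> ** X = X ** \<eta>}"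

definition pX :: "real^'k^'n \<Rightarrow> ((real^'n^'n) \<times> (real^'k^'k)) set" where
  "pX X = {\<zeta>. fst \<zeta> \<in> skew \<and> snd \<zeta> \<in> skew \<and> (\<forall>\<theta>\<in>hX X. g_inner \<zeta> \<theta> = 0)}"

definition pr_p :: "real^'k^'n \<Rightarrow> (real^'n^'n) \<times> (real^'k^'k) \<Rightarrow> (real^'n^'n) \<times> (real^'k^'k)" where
  "pr_p X z = (let \<Omega> = fst z; \<eta> = snd z in
     (X ** transpose X ** \<Omega> + \<Omega> ** X ** transpose X - 2 *\<^sub>R (X ** \<eta> ** transpose X),
      transpose X ** \<Omega> ** X - \<eta>))"

definition ad :: "(real^'n^'n) \<times> (real^'k^'k) \<Rightarrow> (real^'n^'n) \<times> (real^'k^'k) \<Rightarrow> (real^'n^'n) \<times> (real^'k^'k)" where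
  "ad a b = (fst a ** fst b - fst b ** fst a, snd a ** snd b - snd b ** snd a)"

definition gmul :: "(real^'n^'n) \<times> (real^'k^'k) \<Rightarrow> (real^'n^'n) \<times> (real^'k^'k) \<Rightarrow> (real^'n^'n) \<times> (real^'k^'k)" where
  "gmul a b = (fst a ** fst b, snd a ** snd b)"

definition iota_pi :: "real^'k^'n \<Rightarrow> (real^'n^'n) \<times> (real^'k^'k) \<Rightarrow> real^'k^'n" where
  "iota_pi X g = fst g ** X ** transpose (snd g)"

definition Phi :: "(real^'n^'n) \<times> (real^'k^'k) \<Rightarrow> real^'k^'n \<Rightarrow> real^'k^'n" where
  "Phi g V = fst g ** V ** transpose (snd g)"

definition PperpX :: "real^'k^'n \<Rightarrow> real^'k^'n \<Rightarrow> real^'k^'n" where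
  "PperpX X V = (1/2) *\<^sub>R (X ** (transpose X ** V + transpose V ** X))"

definition f_op :: "(real^'n^'n) \<times> (real^'k^'k) \<Rightarrow> real^'k^'n \<Rightarrow> real^'k^'n" where
  "f_op \<xi> V = fst \<xi> ** V - V ** snd \<xi>"

end

theory Submission
  imports Defs
begin

typedef (overloaded) ('a::euclidean_space) endo = "UNIV :: ('a \<Rightarrow>\<^sub>L 'a) set"
  morphisms bl Endo by simp

setup_lifting type_definition_endo

instantiation endo :: (euclidean_space) real_normed_algebra_1
begin

lift_definition zero_endo :: "'a endo" is 0 .
lift_definition one_endo :: "'a endo" is id_blinfun .
lift_definition plus_endo :: "'a endo \<Rightarrow> 'a endo \<Rightarrow> 'a endo" is "(+)" .
lift_definition minus_endo :: "'a endo \<Rightarrow> 'a endo \<Rightarrow> 'a endo" is "(-)" .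
lift_definition uminus_endo :: "'a endo \<Rightarrow> 'a endo" is uminus .
lift_definition times_endo :: "'a endo \<Rightarrow> 'a endo \<Rightarrow> 'a endo" is "(o\<^sub>L)" .
lift_definition scaleR_endo :: "real \<Rightarrow> 'a endo \<Rightarrow> 'a endo" is scaleR .
lift_definition norm_endo :: "'a endo \<Rightarrow> real" is norm .
definition dist_endo :: "'a endo \<Rightarrow> 'a endo \<Rightarrow> real" where "dist_endo a b = norm (a - b)"
definition uniformity_endo :: "('a endo \<times> 'a endo) filter"
  where "uniformity_endo = (INF e\<in>{0<..}. principal {(x, y). dist x y < e})"
definition open_endo :: "'a endo set \<Rightarrow> bool"
  where "open_endo S = (\<forall>x\<in>S. \<forall>\<^sub>F (x', y) in uniformity. x' = x \<longrightarrow> y \<in> S)"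
definition sgn_endo :: "'a endo \<Rightarrow> 'a endo" where "sgn_endo x = scaleR (inverse (norm x)) x"

instance
proof
  fix a b c :: "'a endo" and r s :: real
  show "a * b * c = a * (b * c)" by transfer (auto intro!: blinfun_eqI)
  show "(a + b) * c = a * c + b * c" by transfer (auto intro!: blinfun_eqI simp: blinfun.bilinear_simps)
  show "a * (b + c) = a * b + a * c" by transfer (auto intro!: blinfun_eqI simp: blinfun.bilinear_simps)
  show "1 * a = a" by transfer (auto intro!: blinfun_eqI)
  show "a * 1 = a" by transfer (auto intro!: blinfun_eqI)
  show "(0::'a endo) \<noteq> 1"
  proof transfer
    obtain v :: 'a where "v \<noteq> 0" using SOME_Basis nonzero_Basis by blast
    then show "(0::'a\<Rightarrow>\<^sub>L'a) \<noteq> id_blinfun" by (metis blinfun_apply_id_blinfun blinfun.zero_left)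
  qed
  show "a + b + c = a + (b + c)" by transfer simp
  show "a + b = b + a" by transfer simp
  show "0 + a = a" by transfer simp
  show "- a + a = 0" by transfer simp
  show "a - b = a + - b" by transfer simp
  show "r *\<^sub>R (a + b) = r *\<^sub>R a + r *\<^sub>R b" by transfer (simp add: scaleR_right_distrib)
  show "(r + s) *\<^sub>R a = r *\<^sub>R a + s *\<^sub>R a" by transfer (simp add: scaleR_left_distrib)
  show "r *\<^sub>R s *\<^sub>R a = (r * s) *\<^sub>R a" by transfer simp
  show "1 *\<^sub>R a = a" by transfer simp
  show "r *\<^sub>R a * b = r *\<^sub>R (a * b)" by transfer (auto intro!: blinfun_eqI simp: blinfun.bilinear_simps)
  show "a * r *\<^sub>R b = r *\<^sub>R (a * b)" by transfer (auto intro!: blinfun_eqI simp: blinfun.bilinear_simps)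
  show "dist a b = norm (a - b)" by (simp add: dist_endo_def)
  show "(uniformity :: ('a endo \<times> 'a endo) filter) = (INF e\<in>{0<..}. principal {(x, y). dist x y < e})"
    by (simp add: uniformity_endo_def)
  show "norm (a * b) \<le> norm a * norm b" by transfer (rule norm_blinfun_compose)
  show "norm (1::'a endo) = 1" by transfer simp
  show "(norm a = 0) = (a = 0)" by transfer simp
  show "norm (a + b) \<le> norm a + norm b" by transfer (rule norm_triangle_ineq)
  show "norm (r *\<^sub>R a) = \<bar>r\<bar> * norm a" by transfer simp
  show "sgn a = inverse (norm a) *\<^sub>R a" by (simp add: sgn_endo_def)
next
  fix U :: "'a endo set"
  show "open U = (\<forall>x\<in>U. \<forall>\<^sub>F (x', y) in uniformity. x' = x \<longrightarrow> y \<in> U)"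
    by (simp add: open_endo_def)
qed
end

lemma norm_bl[simp]: "norm (bl x) = norm x" by transfer simp
lemma bl_add[simp]: "bl (x + y) = bl x + bl y" by transfer simp
lemma bl_diff[simp]: "bl (x - y) = bl x - bl y" by transfer simp
lemma bl_scaleR[simp]: "bl (r *\<^sub>R x) = r *\<^sub>R bl x" by transfer simp
lemma bl_mult[simp]: "bl (x * y) = bl x o\<^sub>L bl y" by transfer simp
lemma bl_one[simp]: "bl 1 = id_blinfun" by transfer simp
lemma bl_minus[simp]: "bl (- x) = - bl x" by transfer simp
lemma bl_zero[simp]: "bl 0 = 0" by transfer simp
lemma bl_Endo[simp]: "bl (Endo f) = f" by (simp add: Endo_inverse)

lemma bounded_linear_bl: "bounded_linear bl"
  by (rule bounded_linear_intro[where K=1]) auto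

instance endo :: (euclidean_space) banach
proof
  fix X :: "nat \<Rightarrow> 'a endo"
  assume "Cauchy X"
  then have "Cauchy (\<lambda>n. bl (X n))"
    by (simp add: Cauchy_def dist_norm flip: bl_diff)
  then obtain L where L: "(\<lambda>n. bl (X n)) \<longlonglongrightarrow> L"
    using convergent_eq_Cauchy by blast
  have "X \<longlonglongrightarrow> Endo L"
  proof (rule LIMSEQ_I)
    fix r :: real assume "0 < r"
    from LIMSEQ_D[OF L this] obtain N where "\<forall>n\<ge>N. norm (bl (X n) - L) < r" by blast
    then show "\<exists>N. \<forall>n\<ge>N. norm (X n - Endo L) < r"
      by (metis bl_Endo bl_diff norm_bl)
  qed
  then show "convergent X" by (auto simp: convergent_def)
qed

definition ap :: "'a::euclidean_space endo \<Rightarrow> 'a \<Rightarrow> 'a" where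
  "ap x v = blinfun_apply (bl x) v"

lemma bounded_bilinear_ap: "bounded_bilinear ap"
  unfolding ap_def
  using bounded_bilinear.comp1[OF bounded_bilinear_blinfun_apply bounded_linear_bl] by simp

lemma ap_mult[simp]: "ap (x * y) v = ap x (ap y v)" by (simp add: ap_def)
lemma ap_zero_left[simp]: "ap 0 v = 0" by (simp add: ap_def)
lemma ap_one[simp]: "ap 1 v = v" by (simp add: ap_def)
lemma ap_add_left[simp]: "ap (x + y) v = ap x v + ap y v" by (simp add: ap_def blinfun.bilinear_simps)
lemma ap_scaleR_left[simp]: "ap (r *\<^sub>R x) v = r *\<^sub>R ap x v" by (simp add: ap_def blinfun.bilinear_simps)
lemma ap_minus_left[simp]: "ap (- x) v = - ap x v" by (simp add: ap_def blinfun.bilinear_simps)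
lemma bounded_linear_ap: "bounded_linear (ap x)" unfolding ap_def by (rule blinfun.bounded_linear_right)
lemma linear_ap: "linear (ap x)" using bounded_linear_ap bounded_linear.linear by blast
lemma ap_power: "ap (x ^ n) v = (ap x ^^ n) v" by (induct n arbitrary: v) auto

definition endo_of :: "('a::euclidean_space \<Rightarrow> 'a) \<Rightarrow> 'a endo" where
  "endo_of f = Endo (Blinfun f)"

lemma ap_endo_of: "linear f \<Longrightarrow> ap (endo_of f) = f"
  by (simp add: fun_eq_iff ap_def endo_of_def bounded_linear_Blinfun_apply linear_conv_bounded_linear)

lemma ap_exp: "ap (exp x) v = (\<Sum>n. (1 / fact n) *\<^sub>R ap (x ^ n) v)"
proof -
  have "bounded_linear (\<lambda>x. ap x v)" by (rule bounded_bilinear.bounded_linear_left[OF bounded_bilinear_ap])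
  from bounded_linear.suminf[OF this summable_exp_generic[of x]]
  show ?thesis by (simp add: exp_def divide_inverse_commute)
qed


lemma matrix_add_rdistrib: "((A::real^'m^'n) + B) ** C = A ** C + B ** C"
  by (vector matrix_matrix_mult_def sum.distrib[symmetric] field_simps)
lemma matrix_diff_ldistrib: "(A::real^'m^'n) ** (B - C) = A ** B - A ** C"
  by (vector matrix_matrix_mult_def sum_subtractf[symmetric] field_simps)
lemma matrix_diff_rdistrib: "((A::real^'m^'n) - B) ** C = A ** C - B ** C"
  by (vector matrix_matrix_mult_def sum_subtractf[symmetric] field_simps)
lemma matrix_neg_left[simp]: "(- (A::real^'m^'n)) ** C = - (A ** C)"
  by (vector matrix_matrix_mult_def sum_negf[symmetric])
lemma matrix_neg_right[simp]: "(A::real^'m^'n) ** (- C) = - (A ** C)"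
  by (vector matrix_matrix_mult_def sum_negf[symmetric])
lemma matrix_scaleR_left[simp]: "(r *\<^sub>R (A::real^'m^'n)) ** C = r *\<^sub>R (A ** C)"
  by (simp add: scalar_matrix_assoc)
lemma matrix_scaleR_right[simp]: "(A::real^'m^'n) ** (r *\<^sub>R C) = r *\<^sub>R (A ** C)"
  by (simp add: matrix_scalar_ac)
lemma transpose_add[simp]: "transpose ((A::real^'m^'n) + B) = transpose A + transpose B"
  by (vector transpose_def)
lemma transpose_diff[simp]: "transpose ((A::real^'m^'n) - B) = transpose A - transpose B"
  by (vector transpose_def)
lemma transpose_neg[simp]: "transpose (- (A::real^'m^'n)) = - transpose A"
  by (vector transpose_def)
lemma transpose_zero[simp]: "transpose (0::real^'m^'n) = 0"
  by (vector transpose_def)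
lemma transpose_scaleR[simp]: "transpose (r *\<^sub>R (A::real^'m^'n)) = r *\<^sub>R transpose A"
  by (rule transpose_scalar)

lemma linear_transpose: "linear (transpose :: real^'m^'n \<Rightarrow> real^'n^'m)"
  by (rule linearI) auto
lemma bounded_linear_transpose: "bounded_linear (transpose :: real^'m^'n \<Rightarrow> real^'n^'m)"
  using linear_transpose linear_conv_bounded_linear by blast

lemma bilinear_mm: "bilinear ((**) :: real^'m^'n \<Rightarrow> real^'p^'m \<Rightarrow> real^'p^'n)"
  unfolding bilinear_def
  by (auto intro!: linearI simp: matrix_add_ldistrib matrix_add_rdistrib)
lemma bounded_bilinear_mm: "bounded_bilinear ((**) :: real^'m^'n \<Rightarrow> real^'p^'m \<Rightarrow> real^'p^'n)"
  using bilinear_mm bilinear_conv_bounded_bilinear by blast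

lemma has_vd_mm:
  fixes P :: "real \<Rightarrow> real^'m^'n" and Q :: "real \<Rightarrow> real^'p^'m"
  assumes "(P has_vector_derivative P') (at x within s)" "(Q has_vector_derivative Q') (at x within s)"
  shows "((\<lambda>x. P x ** Q x) has_vector_derivative (P x ** Q' + P' ** Q x)) (at x within s)"
  using bounded_bilinear.has_vector_derivative[OF bounded_bilinear_mm assms] .

definition mx :: "real^'n^'n \<Rightarrow> (real^'n) endo" where
  "mx A = endo_of ((*v) A)"
definition mt :: "(real^'n) endo \<Rightarrow> real^'n^'n" where
  "mt x = matrix (ap x)"

lemma ap_mx[simp]: "ap (mx A) v = A *v v"
  by (simp add: mx_def ap_endo_of)

lemma ap_inject: "(\<And>v. ap x v = ap y v) \<Longrightarrow> x = y"
  unfolding ap_def by (metis blinfun_eqI bl_inject)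

lemma mx_mult: "mx (A ** B) = mx A * mx B"
  by (rule ap_inject) (simp add: matrix_vector_mul_assoc)
lemma mx_one: "mx (mat 1) = 1"
  by (rule ap_inject) simp
lemma mx_scaleR: "mx (r *\<^sub>R A) = r *\<^sub>R mx A"
  by (rule ap_inject) (simp add: matrix_scaleR_vector_ac scaleR_matrix_vector_assoc)
lemma mt_mx[simp]: "mt (mx A) = A"
  by (simp add: mt_def fun_eq_iff[symmetric] flip: ap_mx) (simp add: ap_mx[abs_def])
lemma mx_mt[simp]: "mx (mt x) = x"
  by (rule ap_inject) (simp add: mt_def linear_ap matrix_works linear_matrix_vector_mul_eq)

lemma mx_mpow: "mx (mpow A i) = mx A ^ i"
  by (induct i) (simp_all add: mx_one mx_mult)

lemma linear_mt: "linear mt"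
  by (rule linearI) (simp_all add: mt_def matrix_def vec_eq_iff)

lemma bounded_linear_mt: "bounded_linear (mt :: (real^'n) endo \<Rightarrow> real^'n^'n)"
proof -
  have "norm (mt x) \<le> norm x * (real CARD('n) * real CARD('n))" for x :: "(real^'n) endo"
  proof -
    have c: "\<bar>mt x $ i $ j\<bar> \<le> norm x" for i j
    proof -
      have "\<bar>mt x $ i $ j\<bar> \<le> onorm (ap x)"
        unfolding mt_def by (rule component_le_onorm[OF linear_ap])
      also have "onorm (ap x) = norm x"
        unfolding ap_def by (metis norm_bl norm_blinfun.rep_eq)
      finally show ?thesis .
    qed
    have "norm (mt x) \<le> (\<Sum>i\<in>UNIV. norm (mt x $ i))" by (simp add: norm_vec_def L2_set_le_sum)
    also have "\<dots> \<le> (\<Sum>i\<in>(UNIV::'n set). \<Sum>j\<in>(UNIV::'n set). norm x)"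
    proof (rule sum_mono)
      fix i
      have "norm (mt x $ i) \<le> (\<Sum>j\<in>UNIV. \<bar>mt x $ i $ j\<bar>)" using norm_le_l1_cart by auto
      also have "\<dots> \<le> (\<Sum>j\<in>(UNIV::'n set). norm x)" by (rule sum_mono) (rule c)
      finally show "norm (mt x $ i) \<le> (\<Sum>j\<in>(UNIV::'n set). norm x)" .
    qed
    finally show ?thesis by (simp add: algebra_simps)
  qed
  then show ?thesis
    using linear_add[OF linear_mt] linear_scale[OF linear_mt] by (intro bounded_linear_intro) auto
qed

lemma summable_mexp: "summable (\<lambda>i. (1 / fact i) *\<^sub>R mpow (A::real^'n^'n) i)"
proof -
  have "summable (\<lambda>i. mt ((1 / fact i) *\<^sub>R mx A ^ i))"
    using bounded_linear.summable[OF bounded_linear_mt summable_exp_generic[of "mx A"]]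
    by (simp add: divide_inverse_commute)
  moreover have "mt ((1 / fact i) *\<^sub>R mx A ^ i) = (1 / fact i) *\<^sub>R mpow A i" for i
    by (metis linear_scale[OF linear_mt] mt_mx mx_mpow)
  ultimately show ?thesis by simp
qed

lemma mexp_mt: "mexp A = mt (exp (mx A))"
proof -
  have "mt (exp (mx A)) = (\<Sum>i. mt ((1 / fact i) *\<^sub>R mx A ^ i))"
    using bounded_linear.suminf[OF bounded_linear_mt summable_exp_generic[of "mx A"]]
    by (simp add: exp_def divide_inverse_commute)
  moreover have "mt ((1 / fact i) *\<^sub>R mx A ^ i) = (1 / fact i) *\<^sub>R mpow A i" for i
    by (metis linear_scale[OF linear_mt] mt_mx mx_mpow)
  ultimately show ?thesis by (simp add: mexp_def)
qed

lemma mx_mexp: "mx (mexp A) = exp (mx A)"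
  by (simp add: mexp_mt)

lemma mx_inject: "mx A = mx B \<Longrightarrow> A = B"
  by (metis mt_mx)

lemma mexp_add_commuting: "A ** B = B ** A \<Longrightarrow> mexp (A + B) = mexp A ** mexp B"
proof -
  assume "A ** B = B ** A"
  then have c: "mx A * mx B = mx B * mx A" by (simp flip: mx_mult)
  have "mx (A + B) = mx A + mx B" by (rule ap_inject) (simp add: matrix_vector_mult_add_rdistrib)
  then show ?thesis
    by (intro mx_inject) (simp add: mx_mult mx_mexp exp_add_commuting[OF c])
qed

lemma mexp_zero: "mexp (0::real^'n^'n) = mat 1"
proof -
  have "mx (0::real^'n^'n) = 0" by (rule ap_inject) (simp only: ap_mx ap_zero_left, simp)
  then show ?thesis by (intro mx_inject) (simp add: mx_mexp mx_one)
qed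

lemma mexp_neg_inverse: "mexp (A::real^'n^'n) ** mexp (- A) = mat 1"
  using mexp_add_commuting[of A "- A"] by (simp add: mexp_zero)
lemma mexp_neg_inverse': "mexp (- A::real^'n^'n) ** mexp A = mat 1"
  using mexp_neg_inverse[of "- A"] by simp

lemma mexp_commute: "mexp (A::real^'n^'n) ** A = A ** mexp A"
  by (intro mx_inject) (simp add: mx_mult mx_mexp exp_times_arg_commute)

lemma mexp_has_vd:
  "((\<lambda>s. mexp (s *\<^sub>R (A::real^'n^'n))) has_vector_derivative (A ** mexp (t *\<^sub>R A))) (at t within S)"
proof -
  have "((\<lambda>s. mt (exp (s *\<^sub>R mx A))) has_vector_derivative mt (exp (t *\<^sub>R mx A) * mx A)) (at t within S)"
    by (rule bounded_linear.has_vector_derivative[OF bounded_linear_mt exp_scaleR_has_vector_derivative_right])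
  moreover have "mt (exp (t *\<^sub>R mx A) * mx A) = A ** mexp (t *\<^sub>R A)"
    by (intro mx_inject) (simp add: mx_mult mx_mexp mx_scaleR exp_times_scaleR_commute)
  ultimately show ?thesis by (simp add: mexp_mt mx_scaleR)
qed

lemma mpow_commute: "mpow A i ** A = A ** mpow A i"
  by (induct i) (simp_all add: matrix_mul_assoc[symmetric])

lemma transpose_mpow: "transpose (mpow A i) = mpow (transpose A) i"
  by (induct i) (simp_all add: matrix_transpose_mul mpow_commute[symmetric])

lemma transpose_mexp: "transpose (mexp A) = mexp (transpose A)"
proof -
  have "transpose (mexp A) = (\<Sum>i. transpose ((1 / fact i) *\<^sub>R mpow A i))"
    unfolding mexp_def by (rule bounded_linear.suminf[OF bounded_linear_transpose summable_mexp])
  then show ?thesis by (simp add: mexp_def transpose_mpow)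
qed

lemma mexp_skew_orth:
  assumes "transpose A = - A"
  shows "transpose (mexp A) ** mexp A = mat 1" "mexp A ** transpose (mexp A) = mat 1"
  using assms by (simp_all add: transpose_mexp mexp_neg_inverse mexp_neg_inverse')


lemma orth_eq: "orth S = orthogonal_comp S"
  by (auto simp: orth_def orthogonal_comp_def orthogonal_def inner_commute)

lemma subspace_orth: "subspace (orth S)"
  by (simp add: orth_eq subspace_orthogonal_comp)

lemma orth_orth: "subspace (S::'a::euclidean_space set) \<Longrightarrow> orth (orth S) = S"
  by (simp add: orth_eq orthogonal_comp_self)

lemma in_both_orth: "v \<in> S \<Longrightarrow> v \<in> orth S \<Longrightarrow> v = 0"
  by (auto simp: orth_def)

lemma deriv_in_subspace:
  fixes Z :: "real \<Rightarrow> 'a::euclidean_space"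
  assumes I: "open I" and S: "subspace S" and ZS: "\<And>s. s \<in> I \<Longrightarrow> Z s \<in> S"
    and t: "t \<in> I" and d: "(Z has_vector_derivative Z') (at t)"
  shows "Z' \<in> S"
proof -
  have "Z' \<in> orth (orth S)"
    unfolding orth_def[of "orth S"]
  proof (intro CollectI ballI)
    fix w assume w: "w \<in> orth S"
    have d1: "((\<lambda>s. w \<bullet> Z s) has_vector_derivative w \<bullet> Z') (at t)"
      by (rule bounded_linear.has_vector_derivative[OF bounded_linear_inner_right d])
    have "((\<lambda>s. 0::real) has_vector_derivative w \<bullet> Z') (at t)"
      by (rule has_vector_derivative_transform_within_open[OF d1 I t])
         (use w ZS in \<open>auto simp: orth_def inner_commute\<close>)
    then have "w \<bullet> Z' = 0"
      using vector_derivative_unique_at has_vector_derivative_const by blast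
    then show "Z' \<bullet> w = 0" by (simp add: inner_commute)
  qed
  then show ?thesis using orth_orth[OF S] by simp
qed

lemma transport_iff:
  fixes F G F' :: "real \<Rightarrow> 'a::euclidean_space \<Rightarrow> 'a" and Y Z :: "real \<Rightarrow> 'a"
  assumes I: "open I" and S: "subspace S"
    and Fd: "\<And>z z' t. t \<in> I \<Longrightarrow> (z has_vector_derivative z') (at t) \<Longrightarrow>
              ((\<lambda>s. F s (z s)) has_vector_derivative (F' t (z t) + F t z')) (at t)"
    and Gd: "\<And>y y' t. t \<in> I \<Longrightarrow> (y has_vector_derivative y') (at t) \<Longrightarrow>
              \<exists>z'. ((\<lambda>s. G s (y s)) has_vector_derivative z') (at t)"
    and lin: "\<And>t. linear (F t)"
    and GF: "\<And>t z. t \<in> I \<Longrightarrow> z \<in> S \<Longrightarrow> G t (F t z) = z"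
    and FS: "\<And>t z. t \<in> I \<Longrightarrow> z \<in> S \<Longrightarrow> F t z \<in> W t"
    and key: "\<And>t z. t \<in> I \<Longrightarrow> z \<in> S \<Longrightarrow> F' t z \<in> orth (W t)"
    and ZS: "\<And>t. t \<in> I \<Longrightarrow> Z t \<in> S"
    and YZ: "\<And>t. t \<in> I \<Longrightarrow> Y t = F t (Z t)"
  shows "(\<exists>Y'. \<forall>t\<in>I. Y t \<in> W t \<and> (Y has_vector_derivative Y' t) (at t within I) \<and> Y' t \<in> orth (W t))
     \<longleftrightarrow> (\<exists>Z'. \<forall>t\<in>I. Z t \<in> S \<and> (Z has_vector_derivative Z' t) (at t within I) \<and> Z' t \<in> orth S)"
proof
  assume "\<exists>Z'. \<forall>t\<in>I. Z t \<in> S \<and> (Z has_vector_derivative Z' t) (at t within I) \<and> Z' t \<in> orth S"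
  then obtain Z' where H: "\<forall>t\<in>I. Z t \<in> S \<and> (Z has_vector_derivative Z' t) (at t within I) \<and> Z' t \<in> orth S"
    by blast
  have Z': "(Z has_vector_derivative Z' t) (at t) \<and> Z' t \<in> orth S" if t: "t \<in> I" for t
  proof -
    have "(Z has_vector_derivative Z' t) (at t within I) \<and> Z' t \<in> orth S" using H t by blast
    then show ?thesis using at_within_open[OF t I] by simp
  qed
  have z0: "Z' t = 0" if t: "t \<in> I" for t
  proof -
    have "Z' t \<in> S" using deriv_in_subspace[OF I S ZS t] Z'[OF t] by simp
    then show ?thesis using Z'[OF t] by (intro in_both_orth) auto
  qed
  show "\<exists>Y'. \<forall>t\<in>I. Y t \<in> W t \<and> (Y has_vector_derivative Y' t) (at t within I) \<and> Y' t \<in> orth (W t)"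
  proof (intro exI[of _ "\<lambda>t. F' t (Z t)"] ballI conjI)
    fix t assume t: "t \<in> I"
    show "Y t \<in> W t" using YZ[OF t] FS[OF t ZS[OF t]] by simp
    show "F' t (Z t) \<in> orth (W t)" using key[OF t ZS[OF t]] .
    have "((\<lambda>s. F s (Z s)) has_vector_derivative (F' t (Z t) + F t (Z' t))) (at t)"
      using Fd[OF t] Z'[OF t] by simp
    then have "((\<lambda>s. F s (Z s)) has_vector_derivative F' t (Z t)) (at t)"
      using z0[OF t] linear_0[OF lin] by simp
    then have "(Y has_vector_derivative F' t (Z t)) (at t)"
      by (rule has_vector_derivative_transform_within_open[OF _ I t]) (simp add: YZ)
    then show "(Y has_vector_derivative F' t (Z t)) (at t within I)"
      using at_within_open[OF t I] by simp
  qed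
next
  assume "\<exists>Y'. \<forall>t\<in>I. Y t \<in> W t \<and> (Y has_vector_derivative Y' t) (at t within I) \<and> Y' t \<in> orth (W t)"
  then obtain Y' where H: "\<forall>t\<in>I. Y t \<in> W t \<and> (Y has_vector_derivative Y' t) (at t within I) \<and> Y' t \<in> orth (W t)"
    by blast
  have Y': "(Y has_vector_derivative Y' t) (at t) \<and> Y' t \<in> orth (W t)" if t: "t \<in> I" for t
  proof -
    have "(Y has_vector_derivative Y' t) (at t within I) \<and> Y' t \<in> orth (W t)" using H t by blast
    then show ?thesis using at_within_open[OF t I] by simp
  qed
  have "\<forall>t\<in>I. \<exists>z'. (Z has_vector_derivative z') (at t)"
  proof
    fix t assume t: "t \<in> I"
    obtain z' where "((\<lambda>s. G s (Y s)) has_vector_derivative z') (at t)"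
      using Gd[OF t] Y'[OF t] by blast
    then have "(Z has_vector_derivative z') (at t)"
      by (rule has_vector_derivative_transform_within_open[OF _ I t]) (simp only: YZ GF ZS)
    then show "\<exists>z'. (Z has_vector_derivative z') (at t)" ..
  qed
  then obtain Z' where Z'': "\<forall>t\<in>I. (Z has_vector_derivative Z' t) (at t)"
    by (rule bchoice[elim_format]) blast
  have Z': "(Z has_vector_derivative Z' t) (at t)" if "t \<in> I" for t using Z'' that by blast
  have z0: "Z' t = 0" if t: "t \<in> I" for t
  proof -
    have Z'S: "Z' t \<in> S" using deriv_in_subspace[OF I S ZS t Z'[OF t]] .
    have "((\<lambda>s. F s (Z s)) has_vector_derivative (F' t (Z t) + F t (Z' t))) (at t)"
      using Fd[OF t Z'[OF t]] .
    then have "(Y has_vector_derivative (F' t (Z t) + F t (Z' t))) (at t)"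
      by (rule has_vector_derivative_transform_within_open[OF _ I t]) (simp add: YZ)
    then have "Y' t = F' t (Z t) + F t (Z' t)"
      using Y'[OF t] vector_derivative_unique_at by blast
    then have "F t (Z' t) = Y' t - F' t (Z t)" by simp
    also have "\<dots> \<in> orth (W t)"
      by (rule subspace_diff[OF subspace_orth]) (use Y'[OF t] key[OF t ZS[OF t]] in simp_all)
    finally have "F t (Z' t) = 0" using FS[OF t Z'S] by (rule in_both_orth[rotated])
    then have "G t (F t (Z' t)) = G t (F t 0)" using linear_0[OF lin] by simp
    then show ?thesis using GF[OF t Z'S] GF[OF t subspace_0[OF S]] by simp
  qed
  show "\<exists>Z'. \<forall>t\<in>I. Z t \<in> S \<and> (Z has_vector_derivative Z' t) (at t within I) \<and> Z' t \<in> orth S"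
  proof (intro exI[of _ Z'] ballI conjI)
    fix t assume t: "t \<in> I"
    show "Z t \<in> S" using ZS[OF t] .
    show "(Z has_vector_derivative Z' t) (at t within I)" using Z'[OF t] at_within_open[OF t I] by simp
    show "Z' t \<in> orth S" using z0[OF t] by (simp add: orth_def)
  qed
qed

lemma lin_scaled: "linear L \<Longrightarrow> linear (\<lambda>z. c *\<^sub>R L z)"
  by (rule linearI) (simp_all add: linear_add linear_scale scaleR_add_right)

lemma ap_endo_of_apply: "linear f \<Longrightarrow> ap (endo_of f) v = f v"
  by (simp add: ap_endo_of)

lemma op_exp_endo: "linear L \<Longrightarrow> op_exp L v = ap (exp (endo_of L)) v"
  by (simp add: op_exp_def ap_exp ap_power ap_endo_of)

lemma endo_of_scale: "linear L \<Longrightarrow> endo_of (\<lambda>z. c *\<^sub>R L z) = c *\<^sub>R endo_of L"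
proof (rule ap_inject)
  fix v assume L: "linear L"
  then have "linear (\<lambda>z. c *\<^sub>R L z)" by (rule lin_scaled)
  then show "ap (endo_of (\<lambda>z. c *\<^sub>R L z)) v = ap (c *\<^sub>R endo_of L) v"
    using L by (simp add: ap_endo_of)
qed

lemma op_exp_scaled: "linear L \<Longrightarrow> op_exp (\<lambda>z. c *\<^sub>R L z) v = ap (exp (c *\<^sub>R endo_of L)) v"
  by (simp add: op_exp_endo lin_scaled endo_of_scale)

lemma exp_ap_in_subspace:
  fixes x :: "'a::euclidean_space endo"
  assumes S: "subspace S" and inv: "\<And>v. v \<in> S \<Longrightarrow> ap x v \<in> S" and v: "v \<in> S"
  shows "ap (exp x) v \<in> S"
proof -
  have pw: "ap (x ^ n) v \<in> S" for n
    by (induct n) (simp_all add: v inv)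
  have "(\<lambda>n. ap (x ^ n /\<^sub>R fact n) v) sums ap (\<Sum>n. x ^ n /\<^sub>R fact n) v"
    by (rule bounded_linear.sums[OF bounded_bilinear.bounded_linear_left[OF bounded_bilinear_ap] summable_sums[OF summable_exp_generic[of x]]])
  then have lim: "(\<lambda>N. \<Sum>n<N. ap (x ^ n /\<^sub>R fact n) v) \<longlonglongrightarrow> ap (exp x) v"
    by (simp add: sums_def exp_def)
  moreover have mem: "(\<Sum>n<N. ap (x ^ n /\<^sub>R fact n) v) \<in> S" for N
    using pw by (intro subspace_sum[OF S]) (simp add: subspace_mul[OF S])
  show ?thesis
    by (rule closed_sequentially[OF closed_subspace[OF S] mem lim])
qed

lemma exp_ap_inverse: "ap (exp (- x)) (ap (exp x) v) = v"
proof -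
  have "exp (- x) * exp x = 1" using exp_add_commuting[of "- x" x] by simp
  then have "ap (exp (- x) * exp x) v = v" by simp
  then show ?thesis by (simp only: ap_mult)
qed

lemma exp_ap_has_vd:
  fixes x :: "'a::euclidean_space endo"
  assumes "(z has_vector_derivative z') (at t)"
  shows "((\<lambda>s. ap (exp ((c * s) *\<^sub>R x)) (z s)) has_vector_derivative
           (c *\<^sub>R ap x (ap (exp ((c * t) *\<^sub>R x)) (z t)) + ap (exp ((c * t) *\<^sub>R x)) z')) (at t)"
proof -
  have e: "((\<lambda>s. exp (s *\<^sub>R (c *\<^sub>R x))) has_vector_derivative (c *\<^sub>R x) * exp (t *\<^sub>R (c *\<^sub>R x))) (at t)"
    by (rule exp_scaleR_has_vector_derivative_left)
  have "((\<lambda>s. ap (exp (s *\<^sub>R (c *\<^sub>R x))) (z s)) has_vector_derivative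
          (ap (exp (t *\<^sub>R (c *\<^sub>R x))) z' + ap ((c *\<^sub>R x) * exp (t *\<^sub>R (c *\<^sub>R x))) (z t))) (at t)"
    by (rule bounded_bilinear.has_vector_derivative[OF bounded_bilinear_ap e assms])
  moreover have "\<And>s. s *\<^sub>R (c *\<^sub>R x) = (c * s) *\<^sub>R x" by (simp add: mult.commute)
  ultimately show ?thesis by (simp add: add.commute mult.commute)
qed

lemma exp_ap_isometry:
  fixes x :: "'a::euclidean_space endo" and q :: "'a \<Rightarrow> 'a \<Rightarrow> real"
  assumes q: "bounded_bilinear q" and S: "subspace S" and inv: "\<And>v. v \<in> S \<Longrightarrow> ap x v \<in> S"
    and skew: "\<And>u v. u \<in> S \<Longrightarrow> v \<in> S \<Longrightarrow> q (ap x u) v + q u (ap x v) = 0"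
    and u: "u \<in> S" and v: "v \<in> S"
  shows "q (ap (exp (s *\<^sub>R x)) u) (ap (exp (s *\<^sub>R x)) v) = q u v"
proof -
  let ?h = "\<lambda>s. q (ap (exp (s *\<^sub>R x)) u) (ap (exp (s *\<^sub>R x)) v)"
  have inv': "\<And>w. w \<in> S \<Longrightarrow> ap (s *\<^sub>R x) w \<in> S" for s
    using inv subspace_mul[OF S] by simp
  have "\<forall>r. DERIV ?h r :> 0"
  proof
    fix r
    have du0: "((\<lambda>s. ap (exp ((1 * s) *\<^sub>R x)) u) has_vector_derivative
           (1 *\<^sub>R ap x (ap (exp ((1 * r) *\<^sub>R x)) u) + ap (exp ((1 * r) *\<^sub>R x)) 0)) (at r)"
      by (rule exp_ap_has_vd[where z="\<lambda>_. u"]) (rule has_vector_derivative_const)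
    have dv0: "((\<lambda>s. ap (exp ((1 * s) *\<^sub>R x)) v) has_vector_derivative
           (1 *\<^sub>R ap x (ap (exp ((1 * r) *\<^sub>R x)) v) + ap (exp ((1 * r) *\<^sub>R x)) 0)) (at r)"
      by (rule exp_ap_has_vd[where z="\<lambda>_. v"]) (rule has_vector_derivative_const)
    have du: "((\<lambda>s. ap (exp (s *\<^sub>R x)) u) has_vector_derivative ap x (ap (exp (r *\<^sub>R x)) u)) (at r)"
      using du0 by (simp add: bounded_bilinear.zero_right[OF bounded_bilinear_ap])
    have dv: "((\<lambda>s. ap (exp (s *\<^sub>R x)) v) has_vector_derivative ap x (ap (exp (r *\<^sub>R x)) v)) (at r)"
      using dv0 by (simp add: bounded_bilinear.zero_right[OF bounded_bilinear_ap])
    have "(?h has_vector_derivative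
        (q (ap (exp (r *\<^sub>R x)) u) (ap x (ap (exp (r *\<^sub>R x)) v)) + q (ap x (ap (exp (r *\<^sub>R x)) u)) (ap (exp (r *\<^sub>R x)) v))) (at r)"
      by (rule bounded_bilinear.has_vector_derivative[OF q du dv])
    moreover have "ap (exp (r *\<^sub>R x)) u \<in> S" "ap (exp (r *\<^sub>R x)) v \<in> S"
      using exp_ap_in_subspace[OF S inv'] u v by auto
    ultimately show "DERIV ?h r :> 0"
      using skew[OF \<open>ap (exp (r *\<^sub>R x)) u \<in> S\<close> \<open>ap (exp (r *\<^sub>R x)) v \<in> S\<close>]
      by (simp add: has_real_derivative_iff_has_vector_derivative add.commute)
  qed
  then have "?h s = ?h 0" by (rule DERIV_isconst_all)
  then show ?thesis by simp
qed


lemma inner_mat: "(A::real^'m^'n) \<bullet> B = (\<Sum>i\<in>UNIV. \<Sum>j\<in>UNIV. A$i$j * B$i$j)"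
  by (simp add: inner_vec_def)

lemma inner_mm_left: "((A::real^'m^'n) ** (B::real^'p^'m)) \<bullet> C = B \<bullet> (transpose A ** C)"
proof -
  have "((A ** B) \<bullet> C) = (\<Sum>i\<in>UNIV. \<Sum>j\<in>UNIV. \<Sum>l\<in>UNIV. A$i$l * B$l$j * C$i$j)"
    by (simp add: inner_mat matrix_matrix_mult_def sum_distrib_right)
  also have "\<dots> = (\<Sum>i\<in>UNIV. \<Sum>l\<in>UNIV. \<Sum>j\<in>UNIV. A$i$l * B$l$j * C$i$j)"
    by (rule sum.cong[OF refl], rule sum.swap)
  also have "\<dots> = (\<Sum>l\<in>UNIV. \<Sum>i\<in>UNIV. \<Sum>j\<in>UNIV. A$i$l * B$l$j * C$i$j)"
    by (rule sum.swap)
  also have "\<dots> = (\<Sum>l\<in>UNIV. \<Sum>j\<in>UNIV. \<Sum>i\<in>UNIV. A$i$l * B$l$j * C$i$j)"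
    by (rule sum.cong[OF refl], rule sum.swap)
  also have "\<dots> = B \<bullet> (transpose A ** C)"
    by (simp add: inner_mat matrix_matrix_mult_def transpose_def sum_distrib_left mult_ac)
  finally show ?thesis .
qed

lemma inner_transpose: "transpose (A::real^'m^'n) \<bullet> transpose B = A \<bullet> B"
  by (simp add: inner_mat transpose_def) (rule sum.swap)

lemma inner_mm_right: "((A::real^'m^'n) ** (B::real^'p^'m)) \<bullet> C = A \<bullet> (C ** transpose B)"
proof -
  have "((A ** B) \<bullet> C) = transpose (A ** B) \<bullet> transpose C"
    by (rule inner_transpose[symmetric])
  also have "\<dots> = (transpose B ** transpose A) \<bullet> transpose C"
    by (simp only: matrix_transpose_mul)
  also have "\<dots> = transpose A \<bullet> (B ** transpose C)" by (simp only: inner_mm_left transpose_transpose)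
  also have "\<dots> = transpose A \<bullet> transpose (C ** transpose B)"
    by (simp only: matrix_transpose_mul transpose_transpose)
  also have "\<dots> = A \<bullet> (C ** transpose B)" by (rule inner_transpose)
  finally show ?thesis .
qed

lemma trace_tr: "trace (transpose (A::real^'m^'n) ** B) = A \<bullet> B"
  by (simp add: trace_def matrix_matrix_mult_def transpose_def inner_mat) (rule sum.swap)

lemma skew_sym_inner: "transpose (A::real^'n^'n) = - A \<Longrightarrow> transpose S = S \<Longrightarrow> A \<bullet> S = 0"
proof -
  assume a: "transpose A = - A" and s: "transpose S = S"
  have "A \<bullet> S = transpose A \<bullet> transpose S" by (simp add: inner_transpose)
  also have "\<dots> = - (A \<bullet> S)" using a s by simp
  finally show ?thesis by simp
qed

lemma trace_skew: "transpose (A::real^'n^'n) = - A \<Longrightarrow> trace (A ** B) = - (A \<bullet> B)"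
  by (metis trace_tr transpose_transpose inner_minus_left transpose_neg)


lemma inner_XDXt: "(W::real^'n^'n) \<bullet> ((X::real^'k^'n) ** D ** transpose X) = (transpose X ** W ** X) \<bullet> D"
proof -
  have "W \<bullet> (X ** D ** transpose X) = (X ** D ** transpose X) \<bullet> W" by (rule inner_commute)
  also have "\<dots> = (X ** D) \<bullet> (W ** X)" by (simp only: inner_mm_right transpose_transpose)
  also have "\<dots> = D \<bullet> (transpose X ** (W ** X))" by (rule inner_mm_left)
  also have "\<dots> = (transpose X ** W ** X) \<bullet> D" by (simp add: inner_commute matrix_mul_assoc)
  finally show ?thesis .
qed

lemma skew_iff: "A \<in> skew \<longleftrightarrow> transpose A = - A" by (simp add: skew_def)

lemma g_inner_skew: "fst w \<in> skew \<Longrightarrow> snd w \<in> skew \<Longrightarrow>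
   g_inner w w' = fst w \<bullet> fst w' - 2 * (snd w \<bullet> snd w')"
  by (simp add: g_inner_def skew_iff trace_skew)

definition gi :: "(real^'n^'n) \<times> (real^'k^'k) \<Rightarrow> (real^'n^'n) \<times> (real^'k^'k) \<Rightarrow> real" where
  "gi w w' = fst w \<bullet> fst w' - 2 * (snd w \<bullet> snd w')"

lemma bounded_bilinear_gi: "bounded_bilinear gi"
proof -
  have "bilinear gi"
    unfolding bilinear_def gi_def
    by (auto intro!: linearI simp: inner_add_left inner_add_right algebra_simps)
  then show ?thesis using bilinear_conv_bounded_bilinear by blast
qed

lemma inner_self_zero_mat: "(A::real^'m^'n) \<bullet> A = 0 \<Longrightarrow> A = 0" by simp

locale stf =
  fixes X :: "real^'k^'n"
  assumes XtX: "transpose X ** X = mat 1"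
begin

abbreviation "PX \<equiv> X ** transpose X"

lemma PX_X[simp]: "PX ** X = X"
  by (metis XtX matrix_mul_assoc matrix_mul_rid)
lemma Xt_PX[simp]: "transpose X ** PX = transpose X"
  by (metis XtX matrix_mul_assoc matrix_mul_lid)
lemma PX_PX[simp]: "PX ** PX = PX"
  by (metis PX_X matrix_mul_assoc)
lemma tPX[simp]: "transpose PX = PX"
  by (simp add: matrix_transpose_mul)
lemma XtX_assoc[simp]: "transpose X ** (X ** A) = A"
  by (simp add: matrix_mul_assoc XtX)
lemma PX_assoc[simp]: "X ** transpose X ** (X ** A) = X ** A"
  by (simp add: matrix_mul_assoc)

end


context stf
begin

definition "pc w \<longleftrightarrow> fst w \<in> skew \<and> snd w \<in> skew \<and>
    transpose X ** fst w ** X = 2 *\<^sub>R snd w \<and>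
    fst w = PX ** fst w + fst w ** PX - PX ** fst w ** PX"

lemma XtOm: "Om \<in> skew \<Longrightarrow> Om ** X = X ** eta \<Longrightarrow> eta \<in> skew \<Longrightarrow> transpose X ** Om = eta ** transpose X"
proof -
  assume a: "Om \<in> skew" "Om ** X = X ** eta" "eta \<in> skew"
  have "transpose X ** Om = - transpose (Om ** X)"
    using a(1) by (simp add: matrix_transpose_mul skew_iff)
  also have "\<dots> = eta ** transpose X"
    using a(2,3) by (simp add: matrix_transpose_mul skew_iff)
  finally show ?thesis .
qed

lemma p_imp_pc:
  assumes w: "w \<in> pX X" shows "pc w"
proof -
  obtain Om eta where weq: "w = (Om, eta)" by (cases w)
  have sk: "Om \<in> skew" "eta \<in> skew" using w weq by (auto simp: pX_def)
  have orth: "\<And>th. th \<in> hX X \<Longrightarrow> g_inner w th = 0" using w by (auto simp: pX_def)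
  define D where "D = transpose X ** Om ** X - 2 *\<^sub>R eta"
  have Dsk: "transpose D = - D"
    using sk by (simp add: D_def skew_iff matrix_transpose_mul matrix_mul_assoc)
  have th1: "(X ** D ** transpose X, D) \<in> hX X"
    using Dsk by (simp add: hX_def skew_iff matrix_transpose_mul matrix_mul_assoc[symmetric] XtX)
  have "0 = g_inner w (X ** D ** transpose X, D)" using orth[OF th1] by simp
  also have "\<dots> = Om \<bullet> (X ** D ** transpose X) - 2 * (eta \<bullet> D)"
    using sk weq by (simp add: g_inner_skew)
  also have "\<dots> = (transpose X ** Om ** X) \<bullet> D - (2 *\<^sub>R eta) \<bullet> D"
    by (simp add: inner_XDXt)
  also have "\<dots> = D \<bullet> D" by (simp add: D_def inner_diff_left)
  finally have "D = 0" by simp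
  then have c1: "transpose X ** Om ** X = 2 *\<^sub>R eta" by (simp add: D_def)
  define E where "E = Om - PX ** Om - Om ** PX + PX ** Om ** PX"
  have PE: "PX ** E = 0"
    by (simp add: E_def matrix_add_ldistrib matrix_diff_ldistrib matrix_mul_assoc)
  have EP: "E ** PX = 0"
    by (simp add: E_def matrix_add_rdistrib matrix_diff_rdistrib
        flip: matrix_mul_assoc)
  have Esk: "transpose E = - E"
    using sk by (simp add: E_def skew_iff matrix_transpose_mul matrix_mul_assoc)
  have EX: "E ** X = X ** 0"
    by (simp add: E_def matrix_add_rdistrib matrix_diff_rdistrib XtX flip: matrix_mul_assoc)
  have th2: "(E, 0) \<in> hX X"
    using Esk EX by (simp add: hX_def skew_iff)
  have "0 = g_inner w (E, 0)" using orth[OF th2] by simp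
  also have "\<dots> = Om \<bullet> E" using sk weq by (simp add: g_inner_skew)
  also have "\<dots> = E \<bullet> E"
  proof -
    have "E \<bullet> E = Om \<bullet> E - (PX ** Om) \<bullet> E - (Om ** PX) \<bullet> E + (PX ** Om ** PX) \<bullet> E"
      by (simp add: E_def inner_add_left inner_diff_left)
    also have "(PX ** Om) \<bullet> E = 0" by (simp add: inner_mm_left PE)
    also have "(Om ** PX) \<bullet> E = 0" by (simp add: inner_mm_right EP)
    also have "(PX ** Om ** PX) \<bullet> E = 0" by (simp add: inner_mm_right EP)
    finally show ?thesis by simp
  qed
  finally have "E = 0" by simp
  then have c2: "Om = PX ** Om + Om ** PX - PX ** Om ** PX"
    by (simp add: E_def algebra_simps)
  show ?thesis using sk c1 c2 weq by (simp add: pc_def)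
qed

lemma pc_imp_p:
  assumes w: "pc w" shows "w \<in> pX X"
proof -
  obtain Om eta where weq: "w = (Om, eta)" by (cases w)
  have sk: "Om \<in> skew" "eta \<in> skew" and c1: "transpose X ** Om ** X = 2 *\<^sub>R eta"
    and c2: "Om = PX ** Om + Om ** PX - PX ** Om ** PX"
    using w weq by (auto simp: pc_def)
  have "g_inner w th = 0" if th: "th \<in> hX X" for th
  proof -
    obtain Om' eta' where theq: "th = (Om', eta')" by (cases th)
    have sk': "Om' \<in> skew" "eta' \<in> skew" and h: "Om' ** X = X ** eta'"
      using th theq by (auto simp: hX_def)
    have XtO: "transpose X ** Om' = eta' ** transpose X" using XtOm[OF sk'(1) h sk'(2)] .
    have POm': "PX ** Om' = X ** eta' ** transpose X"
      by (simp add: XtO flip: matrix_mul_assoc)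
    have Om'P: "Om' ** PX = X ** eta' ** transpose X"
      by (simp add: h matrix_mul_assoc)
    have "Om \<bullet> Om' = (PX ** Om) \<bullet> Om' + (Om ** PX) \<bullet> Om' - (PX ** Om ** PX) \<bullet> Om'"
      by (subst (1) c2) (simp add: inner_add_left inner_diff_left)
    also have "(PX ** Om) \<bullet> Om' = Om \<bullet> (X ** eta' ** transpose X)"
      by (simp add: inner_mm_left POm')
    also have "(Om ** PX) \<bullet> Om' = Om \<bullet> (X ** eta' ** transpose X)"
      by (simp add: inner_mm_right Om'P)
    also have "(PX ** Om ** PX) \<bullet> Om' = Om \<bullet> (X ** eta' ** transpose X)"
    proof -
      have "(PX ** Om ** PX) \<bullet> Om' = (PX ** Om) \<bullet> (Om' ** PX)"
        by (simp only: inner_mm_right tPX)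
      also have "\<dots> = Om \<bullet> (PX ** (Om' ** PX))" by (simp only: inner_mm_left tPX)
      also have "PX ** (Om' ** PX) = PX ** (X ** eta' ** transpose X)"
        by (simp only: Om'P)
      also have "\<dots> = X ** eta' ** transpose X"
        by (simp only: matrix_mul_assoc PX_X)
      finally show ?thesis .
    qed
    finally have "Om \<bullet> Om' = Om \<bullet> (X ** eta' ** transpose X)" by simp
    also have "\<dots> = 2 * (eta \<bullet> eta')" by (simp add: inner_XDXt c1)
    finally show ?thesis using sk weq theq by (simp add: g_inner_skew)
  qed
  then show ?thesis using sk weq by (simp add: pX_def)
qed

lemma p_iff: "w \<in> pX X \<longleftrightarrow> pc w"
  using p_imp_pc pc_imp_p by blast

end


definition dI :: "real^'k^'n \<Rightarrow> (real^'n^'n) \<times> (real^'k^'k) \<Rightarrow> real^'k^'n" where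
  "dI X w = fst w ** X - X ** snd w"
definition Lp :: "real^'k^'n \<Rightarrow> real^'k^'n \<Rightarrow> (real^'n^'n) \<times> (real^'k^'k)" where
  "Lp X V = (V ** transpose X - X ** transpose V, transpose X ** V)"

lemma linear_dI: "linear (dI X)"
  by (rule linearI) (auto simp: dI_def matrix_add_rdistrib matrix_add_ldistrib algebra_simps)
lemma linear_Lp: "linear (Lp X)"
  by (rule linearI) (auto simp: Lp_def matrix_add_rdistrib matrix_add_ldistrib matrix_diff_ldistrib algebra_simps)

lemma tan_iff: "V \<in> tanSt X \<longleftrightarrow> transpose X ** V + transpose V ** X = 0"
  by (simp add: tanSt_def)

lemma subspace_tanSt: "subspace (tanSt X)"
  unfolding subspace_def tanSt_def
  by (auto simp: matrix_add_ldistrib matrix_add_rdistrib algebra_simps simp flip: scaleR_add_right)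

context stf
begin

lemma tan_XtV: "V \<in> tanSt X \<Longrightarrow> transpose V ** X = - (transpose X ** V)"
  by (simp add: tan_iff eq_neg_iff_add_eq_0 add.commute)

lemma Lp_dI: assumes "pc w" shows "Lp X (dI X w) = w"
proof -
  obtain Om eta where weq: "w = (Om, eta)" by (cases w)
  have sk: "transpose Om = - Om" "transpose eta = - eta" and c1: "transpose X ** Om ** X = 2 *\<^sub>R eta"
    and c2: "Om = PX ** Om + Om ** PX - PX ** Om ** PX"
    using assms weq by (auto simp: pc_def skew_iff)
  have pp: "PX ** Om ** PX = 2 *\<^sub>R (X ** eta ** transpose X)"
  proof -
    have "PX ** Om ** PX = X ** (transpose X ** Om ** X) ** transpose X" by (simp only: matrix_mul_assoc)
    also have "\<dots> = 2 *\<^sub>R (X ** eta ** transpose X)" by (simp add: c1)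
    finally show ?thesis .
  qed
  have c2': "Om = PX ** Om + Om ** PX - 2 *\<^sub>R (X ** eta ** transpose X)"
    using c2 unfolding pp .
  have "(Om ** X - X ** eta) ** transpose X - X ** transpose (Om ** X - X ** eta)
      = PX ** Om + Om ** PX - 2 *\<^sub>R (X ** eta ** transpose X)"
    using sk by (simp add: matrix_diff_rdistrib matrix_diff_ldistrib matrix_transpose_mul matrix_mul_assoc
        algebra_simps scaleR_2)
  also have "\<dots> = Om" using c2' by simp
  finally have a: "(Om ** X - X ** eta) ** transpose X - X ** transpose (Om ** X - X ** eta) = Om" .
  have "transpose X ** (Om ** X - X ** eta) = transpose X ** Om ** X - eta"
    by (simp add: matrix_diff_ldistrib matrix_mul_assoc XtX)
  also have "\<dots> = 2 *\<^sub>R eta - eta" by (simp only: c1)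
  also have "\<dots> = eta" by (metis add_diff_cancel scaleR_2)
  finally have b: "transpose X ** (Om ** X - X ** eta) = eta" .
  show ?thesis using a b weq by (simp add: Lp_def dI_def)
qed

lemma pc_Lp: assumes V: "V \<in> tanSt X" shows "pc (Lp X V)"
proof -
  have t: "transpose V ** X = - (transpose X ** V)" using tan_XtV[OF V] .
  have s1: "V ** transpose X - X ** transpose V \<in> skew"
    by (simp add: skew_iff matrix_transpose_mul)
  have s2: "transpose X ** V \<in> skew"
    by (simp add: skew_iff matrix_transpose_mul t)
  have c1: "transpose X ** (V ** transpose X - X ** transpose V) ** X = 2 *\<^sub>R (transpose X ** V)"
    by (simp add: matrix_diff_ldistrib matrix_diff_rdistrib XtX t scaleR_2 flip: matrix_mul_assoc)
  have c2: "V ** transpose X - X ** transpose V =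
     PX ** (V ** transpose X - X ** transpose V) + (V ** transpose X - X ** transpose V) ** PX
     - PX ** (V ** transpose X - X ** transpose V) ** PX"
    by (simp add: matrix_diff_ldistrib matrix_diff_rdistrib matrix_mul_assoc XtX)
       (simp add: matrix_mul_assoc[symmetric] t XtX)
  show ?thesis using s1 s2 c1 c2 by (simp add: pc_def Lp_def)
qed

lemma dI_Lp: assumes V: "V \<in> tanSt X" shows "dI X (Lp X V) = V"
proof -
  have t: "transpose V ** X = - (transpose X ** V)" using tan_XtV[OF V] .
  show ?thesis
    by (simp add: dI_def Lp_def matrix_diff_rdistrib matrix_mul_assoc[symmetric] XtX t)
qed

lemma dI_tan: assumes "fst w \<in> skew" "snd w \<in> skew" shows "dI X w \<in> tanSt X"
  using assms
  by (simp add: tan_iff dI_def skew_iff matrix_diff_ldistrib matrix_diff_rdistrib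
      matrix_transpose_mul XtX flip: matrix_mul_assoc)

lemma gi_Lp: assumes V: "V \<in> tanSt X" and V': "V' \<in> tanSt X"
  shows "gi (Lp X V) (Lp X V') = 2 * (V \<bullet> V')"
proof -
  have t: "transpose V ** X = - (transpose X ** V)" using tan_XtV[OF V] .
  have t': "transpose V' ** X = - (transpose X ** V')" using tan_XtV[OF V'] .
  have e1: "(U ** transpose X) \<bullet> (U' ** transpose X) = U \<bullet> U'" for U U' :: "real^'k^'n"
    by (simp add: inner_mm_right XtX flip: matrix_mul_assoc)
  have e2: "(U ** transpose X) \<bullet> (X ** transpose U') = - ((transpose X ** U) \<bullet> (transpose X ** U'))"
    if U': "U' \<in> tanSt X" for U U'
  proof -
    have tU: "transpose U' ** X = - (transpose X ** U')" using tan_XtV[OF U'] .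
    have "(U ** transpose X) \<bullet> (X ** transpose U') = U \<bullet> (X ** transpose U' ** X)"
      by (simp add: inner_mm_right)
    also have "\<dots> = U \<bullet> (X ** (- (transpose X ** U')))" by (simp add: matrix_mul_assoc[symmetric] tU)
    also have "\<dots> = - ((transpose X ** U) \<bullet> (transpose X ** U'))"
      by (simp add: inner_commute[of U] inner_mm_left)
    finally show ?thesis .
  qed
  have e4: "(X ** transpose U) \<bullet> (X ** transpose U') = U \<bullet> U'" for U U' :: "real^'k^'n"
    by (simp add: inner_mm_left inner_transpose flip: matrix_mul_assoc)
  have "gi (Lp X V) (Lp X V') =
     (V ** transpose X) \<bullet> (V' ** transpose X) - (V ** transpose X) \<bullet> (X ** transpose V')
     - (V' ** transpose X) \<bullet> (X ** transpose V) + (X ** transpose V) \<bullet> (X ** transpose V')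
     - 2 * ((transpose X ** V) \<bullet> (transpose X ** V'))"
    by (simp add: gi_def Lp_def inner_diff_left inner_diff_right inner_commute[of "X ** transpose V" "V' ** transpose X"])
  also have "\<dots> = 2 * (V \<bullet> V')"
    using e2[OF V'] e2[OF V, of V'] by (simp add: e1 e4 inner_commute[of "transpose X ** V'"])
  finally show ?thesis .
qed

end


lemma vec_identity1:
  fixes a b c d e f :: "real^'k^'n"
  shows "2 *\<^sub>R (2 *\<^sub>R a + b - c - d - e) - (4 *\<^sub>R a + 2 *\<^sub>R b - c - 4 *\<^sub>R d - 2 *\<^sub>R e + f - a + d)
     = a + d - c - f"
  by (simp add: vec_eq_iff algebra_simps)

lemma vec2[simp]: "2 * (v::real^'k^'n) = 2 *\<^sub>R v"
  by (simp add: vec_eq_iff)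

lemma vec2'[simp]: "(v::real^'k^'n) * 2 = 2 *\<^sub>R v"
  by (simp add: vec_eq_iff)

context stf
begin

lemma sym_normal: assumes S: "transpose S = S" shows "X ** S \<in> orth (tanSt X)"
  unfolding orth_def
proof (intro CollectI ballI)
  fix V assume V: "V \<in> tanSt X"
  have sk: "transpose (transpose X ** V) = - (transpose X ** V)"
    using tan_XtV[OF V] by (simp add: matrix_transpose_mul)
  have "(X ** S) \<bullet> V = S \<bullet> (transpose X ** V)" by (rule inner_mm_left)
  also have "\<dots> = 0" using skew_sym_inner[OF sk S] by (simp add: inner_commute)
  finally show "(X ** S) \<bullet> V = 0" .
qed

lemma KL:
  assumes w: "pc (Om, eta)" and XD: "transpose X ** D = 0"
  shows "Om ** D = - (X ** (transpose (Om ** X - 2 *\<^sub>R (X ** eta)) ** D))"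
proof -
  have sk: "transpose Om = - Om" "transpose eta = - eta"
    and c2: "Om = PX ** Om + Om ** PX - PX ** Om ** PX"
    using w by (auto simp: pc_def skew_iff)
  have PD: "PX ** D = 0" by (simp add: XD flip: matrix_mul_assoc)
  have "Om ** D = (PX ** Om + Om ** PX - PX ** Om ** PX) ** D" by (subst (1) c2) (rule refl)
  also have "\<dots> = PX ** Om ** D"
    by (simp add: matrix_add_rdistrib matrix_diff_rdistrib XD flip: matrix_mul_assoc)
  also have "\<dots> = X ** (transpose X ** Om ** D)" by (simp add: matrix_mul_assoc)
  also have "transpose X ** Om = 2 *\<^sub>R (eta ** transpose X) - transpose (Om ** X - 2 *\<^sub>R (X ** eta))"
    using sk by (simp add: matrix_transpose_mul)
  finally show ?thesis
    by (simp add: matrix_diff_rdistrib matrix_diff_ldistrib XD flip: matrix_mul_assoc)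
qed

lemma dI_pr: "dI X (pr_p X u) = dI X u"
  by (simp add: dI_def pr_p_def Let_def matrix_add_rdistrib matrix_diff_rdistrib matrix_diff_ldistrib
      XtX flip: matrix_mul_assoc)

lemma LCid:
  assumes xi: "pc (x1, x2)" and w: "pc (Om, eta)"
  shows "2 *\<^sub>R f_op (x1, x2) (dI X (Om, eta)) - dI X (ad (x1, x2) (Om, eta)) \<in> orth (tanSt X)"
proof -
  have skx: "transpose x1 = - x1" "transpose x2 = - x2" and cx: "transpose X ** x1 ** X = 2 *\<^sub>R x2"
    using xi by (auto simp: pc_def skew_iff)
  have skw: "transpose Om = - Om" "transpose eta = - eta" and cw: "transpose X ** Om ** X = 2 *\<^sub>R eta"
    using w by (auto simp: pc_def skew_iff)
  define B where "B = x1 ** X - 2 *\<^sub>R (X ** x2)"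
  define D where "D = Om ** X - 2 *\<^sub>R (X ** eta)"
  have XtB: "transpose X ** B = 0"
    by (simp add: B_def matrix_diff_ldistrib cx matrix_mul_assoc XtX)
  have XtD: "transpose X ** D = 0"
    by (simp add: D_def matrix_diff_ldistrib cw matrix_mul_assoc XtX)
  have x1X: "x1 ** X = 2 *\<^sub>R (X ** x2) + B" by (simp add: B_def)
  have OmX: "Om ** X = 2 *\<^sub>R (X ** eta) + D" by (simp add: D_def)
  have x1D: "x1 ** D = - (X ** (transpose B ** D))"
    using KL[OF xi XtD] by (simp add: B_def)
  have OmB: "Om ** B = - (X ** (transpose D ** B))"
    using KL[OF w XtB] by (simp add: D_def)
  have dIw: "dI X (Om, eta) = X ** eta + D"
    by (simp add: dI_def OmX)
  have F1: "f_op (x1, x2) (dI X (Om, eta)) = (x1 ** X) ** eta + x1 ** D - X ** eta ** x2 - D ** x2"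
    by (simp add: f_op_def dIw matrix_add_ldistrib matrix_add_rdistrib matrix_mul_assoc)
  also have "\<dots> = 2 *\<^sub>R (X ** x2 ** eta) + B ** eta - X ** (transpose B ** D) - X ** eta ** x2 - D ** x2"
    by (simp add: x1X x1D matrix_add_rdistrib)
  finally have F: "f_op (x1, x2) (dI X (Om, eta)) =
      2 *\<^sub>R (X ** x2 ** eta) + B ** eta - X ** (transpose B ** D) - X ** eta ** x2 - D ** x2" .
  have "dI X (ad (x1, x2) (Om, eta)) = x1 ** (Om ** X) - Om ** (x1 ** X) - X ** x2 ** eta + X ** eta ** x2"
    by (simp add: dI_def ad_def matrix_diff_rdistrib matrix_diff_ldistrib matrix_mul_assoc)
  also have "\<dots> = x1 ** (2 *\<^sub>R (X ** eta) + D) - Om ** (2 *\<^sub>R (X ** x2) + B) - X ** x2 ** eta + X ** eta ** x2"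
    by (simp only: OmX x1X)
  also have "\<dots> = 2 *\<^sub>R ((x1 ** X) ** eta) + x1 ** D - 2 *\<^sub>R ((Om ** X) ** x2) - Om ** B
       - X ** x2 ** eta + X ** eta ** x2"
    by (simp add: matrix_add_ldistrib matrix_mul_assoc)
  also have "\<dots> = 4 *\<^sub>R (X ** x2 ** eta) + 2 *\<^sub>R (B ** eta) - X ** (transpose B ** D)
       - 4 *\<^sub>R (X ** eta ** x2) - 2 *\<^sub>R (D ** x2) + X ** (transpose D ** B) - X ** x2 ** eta + X ** eta ** x2"
    by (simp add: x1X OmX x1D OmB matrix_add_rdistrib algebra_simps)
  finally have G: "dI X (ad (x1, x2) (Om, eta)) = 4 *\<^sub>R (X ** x2 ** eta) + 2 *\<^sub>R (B ** eta) - X ** (transpose B ** D)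
       - 4 *\<^sub>R (X ** eta ** x2) - 2 *\<^sub>R (D ** x2) + X ** (transpose D ** B) - X ** x2 ** eta + X ** eta ** x2" .
  have "2 *\<^sub>R f_op (x1, x2) (dI X (Om, eta)) - dI X (ad (x1, x2) (Om, eta))
      = X ** x2 ** eta + X ** eta ** x2 - X ** (transpose B ** D) - X ** (transpose D ** B)"
    unfolding F G by (rule vec_identity1)
  also have "\<dots> = X ** (x2 ** eta + eta ** x2 - transpose B ** D - transpose D ** B)"
    by (simp add: matrix_add_ldistrib matrix_diff_ldistrib matrix_mul_assoc)
  finally show ?thesis
    by (simp, intro sym_normal) (simp add: matrix_transpose_mul skx skw algebra_simps)
qed

lemma geo_id:
  assumes xi: "pc (x1, x2)"
  shows "f_op (x1, x2) (f_op (x1, x2) X) \<in> orth (tanSt X)"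
proof -
  have skx: "transpose x1 = - x1" "transpose x2 = - x2" and cx: "transpose X ** x1 ** X = 2 *\<^sub>R x2"
    using xi by (auto simp: pc_def skew_iff)
  define B where "B = x1 ** X - 2 *\<^sub>R (X ** x2)"
  have XtB: "transpose X ** B = 0"
    by (simp add: B_def matrix_diff_ldistrib cx matrix_mul_assoc XtX)
  have x1X: "x1 ** X = 2 *\<^sub>R (X ** x2) + B" by (simp add: B_def)
  have x1B: "x1 ** B = - (X ** (transpose B ** B))"
    using KL[OF xi XtB] by (simp add: B_def)
  have fX: "f_op (x1, x2) X = X ** x2 + B" by (simp add: f_op_def x1X)
  have "f_op (x1, x2) (f_op (x1, x2) X) = x1 ** (X ** x2 + B) - (X ** x2 + B) ** x2"
    by (simp only: fX) (simp add: f_op_def)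
  also have "\<dots> = (x1 ** X) ** x2 + x1 ** B - X ** x2 ** x2 - B ** x2"
    by (simp add: matrix_add_ldistrib matrix_add_rdistrib matrix_mul_assoc)
  also have "\<dots> = X ** (x2 ** x2 - transpose B ** B)"
    by (simp add: x1X x1B matrix_add_rdistrib matrix_diff_ldistrib matrix_mul_assoc algebra_simps)
  finally show ?thesis
    by (simp, intro sym_normal) (simp add: matrix_transpose_mul skx)
qed

end

lemma subspace_orth_tan: "subspace (orth (tanSt Y))" by (rule subspace_orth)

lemma f_op_skew_adj:
  assumes "transpose x1 = - x1" "transpose x2 = - x2"
  shows "f_op (x1, x2) W \<bullet> W' + W \<bullet> f_op (x1, x2) W' = 0"
proof -
  have a: "(x1 ** W) \<bullet> W' = - (W \<bullet> (x1 ** W'))"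
    using assms by (simp add: inner_mm_left)
  have b: "(W ** x2) \<bullet> W' = - (W \<bullet> (W' ** x2))"
    using assms by (simp add: inner_mm_right)
  show ?thesis using a b by (simp add: f_op_def inner_diff_left inner_diff_right)
qed

context stf
begin

lemma Pp_tan: "V - PperpX X V \<in> tanSt X"
proof -
  have "transpose X ** PperpX X V = (1/2) *\<^sub>R (transpose X ** V + transpose V ** X)"
    by (simp add: PperpX_def XtX_assoc)
  moreover have "transpose (PperpX X V) ** X = (1/2) *\<^sub>R (transpose X ** V + transpose V ** X)"
    by (simp add: PperpX_def matrix_transpose_mul matrix_add_rdistrib XtX flip: matrix_mul_assoc)
  ultimately show ?thesis
    by (simp add: tan_iff matrix_diff_ldistrib matrix_diff_rdistrib algebra_simps)
qed

lemma Pp_normal: "PperpX X V \<in> orth (tanSt X)"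
proof -
  have "PperpX X V = X ** ((1/2) *\<^sub>R (transpose X ** V + transpose V ** X))"
    by (simp add: PperpX_def)
  also have "\<dots> \<in> orth (tanSt X)"
    by (rule sym_normal) (simp add: matrix_transpose_mul add.commute)
  finally show ?thesis .
qed

lemma Pp_id: assumes W: "W \<in> orth (tanSt X)" shows "PperpX X W = W"
proof -
  have "W - PperpX X W \<in> orth (tanSt X)"
    using W Pp_normal subspace_diff[OF subspace_orth] by blast
  then have "W - PperpX X W = 0" using Pp_tan in_both_orth by blast
  then show ?thesis by simp
qed

lemma Pp_sym: "PperpX X U \<bullet> V = U \<bullet> PperpX X V"
proof -
  have e: "PperpX X U \<bullet> V = (1/2) * ((transpose X ** U) \<bullet> (transpose X ** V) + (transpose U ** X) \<bullet> (transpose X ** V))"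
    for U V :: "real^'k^'n"
    by (simp add: PperpX_def inner_mm_left inner_add_left)
  have s: "(transpose U ** X) \<bullet> (transpose X ** V) = (transpose V ** X) \<bullet> (transpose X ** U)"
  proof -
    have "(transpose U ** X) \<bullet> (transpose X ** V) = transpose (transpose U ** X) \<bullet> transpose (transpose X ** V)"
      by (rule inner_transpose[symmetric])
    also have "\<dots> = (transpose X ** U) \<bullet> (transpose V ** X)"
      by (simp only: matrix_transpose_mul transpose_transpose)
    also have "\<dots> = (transpose V ** X) \<bullet> (transpose X ** U)" by (rule inner_commute)
    finally show ?thesis .
  qed
  show ?thesis using e[of U V] e[of V U] s by (simp add: inner_commute)
qed

lemma K_skew:
  assumes "transpose x1 = - x1" "transpose x2 = - x2"
    and W: "W \<in> orth (tanSt X)" and W': "W' \<in> orth (tanSt X)"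
  shows "PperpX X (f_op (x1, x2) W) \<bullet> W' + W \<bullet> PperpX X (f_op (x1, x2) W') = 0"
proof -
  have 1: "PperpX X (f_op (x1, x2) W) \<bullet> W' = f_op (x1, x2) W \<bullet> W'"
  proof -
    have "PperpX X (f_op (x1, x2) W) \<bullet> W' = f_op (x1, x2) W \<bullet> PperpX X W'" by (rule Pp_sym)
    also have "PperpX X W' = W'" by (rule Pp_id[OF W'])
    finally show ?thesis .
  qed
  have 2: "W \<bullet> PperpX X (f_op (x1, x2) W') = W \<bullet> f_op (x1, x2) W'"
  proof -
    have "W \<bullet> PperpX X (f_op (x1, x2) W') = PperpX X W \<bullet> f_op (x1, x2) W'" by (rule Pp_sym[symmetric])
    also have "PperpX X W = W" by (rule Pp_id[OF W])
    finally show ?thesis .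
  qed
  show ?thesis unfolding 1 2 by (rule f_op_skew_adj[OF assms(1,2)])
qed

end

definition orthm :: "real^'n^'n \<Rightarrow> bool" where
  "orthm a \<longleftrightarrow> transpose a ** a = mat 1 \<and> a ** transpose a = mat 1"

lemma cancel_assoc: "transpose a ** a = mat 1 \<Longrightarrow> transpose a ** (a ** Z) = Z"
  by (simp add: matrix_mul_assoc)

lemma orthm_cancel:
  assumes "orthm a" shows "transpose a ** (a ** Z) = Z" "a ** (transpose a ** Z) = Z"
  using assms by (simp_all add: orthm_def matrix_mul_assoc)

lemma orthm_transpose: "orthm a \<Longrightarrow> orthm (transpose a)"
  by (simp add: orthm_def)

lemma orthm_mexp: "transpose x = - x \<Longrightarrow> orthm (mexp (t *\<^sub>R x))"
  using mexp_skew_orth[of "t *\<^sub>R x"] by (simp add: orthm_def)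

lemma Phi_inner:
  assumes a: "orthm a" and b: "orthm b"
  shows "Phi (a, b) U \<bullet> Phi (a, b) V = U \<bullet> V"
proof -
  have "Phi (a, b) U \<bullet> Phi (a, b) V = (a ** U) \<bullet> (a ** V ** transpose b ** b)"
    by (simp add: Phi_def inner_mm_right)
  also have "\<dots> = (a ** U) \<bullet> (a ** V)"
    using b by (simp add: orthm_def flip: matrix_mul_assoc)
  also have "\<dots> = U \<bullet> V"
    using a by (simp add: orthm_def inner_mm_left matrix_mul_assoc)
  finally show ?thesis .
qed

lemma Phi_tan:
  assumes a: "orthm a" and V: "V \<in> tanSt Y"
  shows "Phi (a, b) V \<in> tanSt (Phi (a, b) Y)"
proof -
  have "transpose Y ** V + transpose V ** Y = 0" using V by (simp add: tan_iff)
  then have "b ** (transpose Y ** V + transpose V ** Y) ** transpose b = 0" by simp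
  moreover have "transpose (Phi (a, b) Y) ** Phi (a, b) V + transpose (Phi (a, b) V) ** Phi (a, b) Y
      = b ** (transpose Y ** V + transpose V ** Y) ** transpose b"
    using a by (simp add: Phi_def orthm_cancel matrix_transpose_mul matrix_add_ldistrib matrix_add_rdistrib
        flip: matrix_mul_assoc)
  ultimately show ?thesis by (simp add: tan_iff)
qed

lemma Phi_inv1: "orthm a \<Longrightarrow> orthm b \<Longrightarrow> Phi (transpose a, transpose b) (Phi (a, b) V) = V"
  by (simp add: Phi_def orthm_def flip: matrix_mul_assoc) (simp add: matrix_mul_assoc)
lemma Phi_inv2: "orthm a \<Longrightarrow> orthm b \<Longrightarrow> Phi (a, b) (Phi (transpose a, transpose b) V) = V"
  by (simp add: Phi_def orthm_def flip: matrix_mul_assoc) (simp add: matrix_mul_assoc)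

lemma linear_Phi: "linear (Phi g)"
  by (rule linearI) (simp_all add: Phi_def matrix_add_ldistrib matrix_add_rdistrib)

lemma bounded_linear_Phi: "bounded_linear (Phi g)"
  using linear_Phi linear_conv_bounded_linear by blast

lemma Phi_normal:
  assumes a: "orthm a" and b: "orthm b" and V: "V \<in> orth (tanSt Y)"
  shows "Phi (a, b) V \<in> orth (tanSt (Phi (a, b) Y))"
  unfolding orth_def
proof (intro CollectI ballI)
  fix W assume W: "W \<in> tanSt (Phi (a, b) Y)"
  have "Phi (transpose a, transpose b) W \<in> tanSt (Phi (transpose a, transpose b) (Phi (a, b) Y))"
    by (rule Phi_tan[OF orthm_transpose[OF a] W])
  then have W': "Phi (transpose a, transpose b) W \<in> tanSt Y" using Phi_inv1[OF a b] by simp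
  have "Phi (a, b) V \<bullet> W = Phi (a, b) V \<bullet> Phi (a, b) (Phi (transpose a, transpose b) W)"
    using Phi_inv2[OF a b] by simp
  also have "\<dots> = V \<bullet> Phi (transpose a, transpose b) W" by (rule Phi_inner[OF a b])
  also have "\<dots> = 0" using V W' by (simp add: orth_def)
  finally show "Phi (a, b) V \<bullet> W = 0" .
qed

lemma Phi_stiefel: assumes a: "orthm a" and b: "orthm b" and Y: "Y \<in> Stiefel"
  shows "Phi (a, b) Y \<in> Stiefel"
  using assms by (simp add: Stiefel_def Phi_def orthm_cancel cancel_assoc matrix_transpose_mul
      flip: matrix_mul_assoc) (simp add: orthm_def matrix_mul_assoc)

lemma Phi_image_tan:
  assumes a: "orthm a" and b: "orthm b"
  shows "Phi (a, b) ` tanSt Y = tanSt (Phi (a, b) Y)"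
proof
  show "Phi (a, b) ` tanSt Y \<subseteq> tanSt (Phi (a, b) Y)" using Phi_tan[OF a] by blast
  show "tanSt (Phi (a, b) Y) \<subseteq> Phi (a, b) ` tanSt Y"
  proof
    fix W assume W: "W \<in> tanSt (Phi (a, b) Y)"
    have "Phi (transpose a, transpose b) W \<in> tanSt (Phi (transpose a, transpose b) (Phi (a, b) Y))"
      by (rule Phi_tan[OF orthm_transpose[OF a] W])
    then have "Phi (transpose a, transpose b) W \<in> tanSt Y" using Phi_inv1[OF a b] by simp
    then show "W \<in> Phi (a, b) ` tanSt Y" using Phi_inv2[OF a b] by (metis image_eqI)
  qed
qed

lemma Phi_image_normal:
  assumes a: "orthm a" and b: "orthm b"
  shows "Phi (a, b) ` orth (tanSt Y) = orth (tanSt (Phi (a, b) Y))"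
proof
  show "Phi (a, b) ` orth (tanSt Y) \<subseteq> orth (tanSt (Phi (a, b) Y))" using Phi_normal[OF a b] by blast
  show "orth (tanSt (Phi (a, b) Y)) \<subseteq> Phi (a, b) ` orth (tanSt Y)"
  proof
    fix W assume W: "W \<in> orth (tanSt (Phi (a, b) Y))"
    have "Phi (transpose a, transpose b) W \<in> orth (tanSt (Phi (transpose a, transpose b) (Phi (a, b) Y)))"
      by (rule Phi_normal[OF orthm_transpose[OF a] orthm_transpose[OF b] W])
    then have "Phi (transpose a, transpose b) W \<in> orth (tanSt Y)" using Phi_inv1[OF a b] by simp
    then show "W \<in> Phi (a, b) ` orth (tanSt Y)" using Phi_inv2[OF a b] by (metis image_eqI)
  qed
qed

lemma mexp_scaled_commute: "mexp (t *\<^sub>R (A::real^'n^'n)) ** A = A ** mexp (t *\<^sub>R A)"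
  by (intro mx_inject) (simp add: mx_mult mx_mexp mx_scaleR exp_times_scaleR_commute)

lemma PhD:
  fixes x1 :: "real^'n^'n" and x2 :: "real^'k^'k" and U :: "real \<Rightarrow> real^'k^'n"
  assumes sk: "transpose x2 = - x2" and dU: "(U has_vector_derivative U') (at t)"
  shows "((\<lambda>s. Phi (mexp (s *\<^sub>R x1), mexp (s *\<^sub>R x2)) (U s)) has_vector_derivative
           Phi (mexp (t *\<^sub>R x1), mexp (t *\<^sub>R x2)) (f_op (x1, x2) (U t) + U')) (at t)"
proof -
  let ?a = "mexp (t *\<^sub>R x1)" and ?b = "mexp (t *\<^sub>R x2)"
  have da: "((\<lambda>s. mexp (s *\<^sub>R x1)) has_vector_derivative x1 ** ?a) (at t)" by (rule mexp_has_vd)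
  have db: "((\<lambda>s. transpose (mexp (s *\<^sub>R x2))) has_vector_derivative transpose (x2 ** ?b)) (at t)"
    by (rule bounded_linear.has_vector_derivative[OF bounded_linear_transpose mexp_has_vd])
  have d1: "((\<lambda>s. mexp (s *\<^sub>R x1) ** U s) has_vector_derivative (?a ** U' + x1 ** ?a ** U t)) (at t)"
    by (rule has_vd_mm[OF da dU])
  have d2: "((\<lambda>s. mexp (s *\<^sub>R x1) ** U s ** transpose (mexp (s *\<^sub>R x2))) has_vector_derivative
     (?a ** U t ** transpose (x2 ** ?b) + (?a ** U' + x1 ** ?a ** U t) ** transpose ?b)) (at t)"
    by (rule has_vd_mm[OF d1 db])
  have c1: "x1 ** (?a ** Z) = ?a ** (x1 ** Z)" for Z :: "real^'k^'n"
    by (simp add: matrix_mul_assoc mexp_scaled_commute)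
  have c2: "transpose ?b ** x2 = x2 ** transpose ?b"
    using arg_cong[OF mexp_scaled_commute[of t x2], of transpose] sk
    by (simp add: matrix_transpose_mul)
  have "?a ** U t ** transpose (x2 ** ?b) + (?a ** U' + x1 ** ?a ** U t) ** transpose ?b
      = Phi (?a, ?b) (f_op (x1, x2) (U t) + U')"
    using sk by (simp add: Phi_def f_op_def matrix_transpose_mul matrix_add_ldistrib matrix_add_rdistrib
        matrix_diff_ldistrib matrix_diff_rdistrib c1 c2 algebra_simps flip: matrix_mul_assoc)
  then show ?thesis using d2 by (simp add: Phi_def)
qed


lemma iota_hd:
  "(iota_pi X has_derivative (\<lambda>h. fst g ** X ** transpose (snd h) + fst h ** X ** transpose (snd g))) (at g)"
proof -
  have f: "((\<lambda>g. fst g ** X) has_derivative (\<lambda>g. fst g ** X)) (at g)"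
    by (rule bounded_linear_imp_has_derivative)
       (rule bounded_linear_compose[OF bounded_bilinear.bounded_linear_left[OF bounded_bilinear_mm] bounded_linear_fst])
  have h: "((\<lambda>g. transpose (snd g)) has_derivative (\<lambda>g. transpose (snd g))) (at g)"
    by (rule bounded_linear_imp_has_derivative)
       (rule bounded_linear_compose[OF bounded_linear_transpose bounded_linear_snd])
  show ?thesis
    using bounded_bilinear.FDERIV[OF bounded_bilinear_mm f h] by (simp add: iota_pi_def[abs_def])
qed

lemma iota_fd: "frechet_derivative (iota_pi X) (at g) =
   (\<lambda>h. fst g ** X ** transpose (snd h) + fst h ** X ** transpose (snd g))"
  by (rule frechet_derivative_at[OF iota_hd, symmetric])

lemma linear_gmul: "linear (gmul a)"
  by (rule linearI) (simp_all add: gmul_def matrix_add_ldistrib)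

lemma gmul_fd: "frechet_derivative (gmul a) (at x) = gmul a"
proof -
  have "bounded_linear (gmul a)" using linear_gmul linear_conv_bounded_linear by blast
  then show ?thesis by (rule frechet_derivative_at[OF bounded_linear_imp_has_derivative, symmetric])
qed

lemma linear_pr: "linear (pr_p X)"
  by (rule linearI)
     (simp_all add: pr_p_def Let_def matrix_add_ldistrib matrix_add_rdistrib algebra_simps)

lemma linear_ad: "linear (ad xi)"
  by (rule linearI)
     (simp_all add: ad_def matrix_add_ldistrib matrix_add_rdistrib algebra_simps)

lemma g_sym: "g_inner a b = g_inner b a"
  unfolding g_inner_def by (simp only: trace_mul_sym[of "fst a"] trace_mul_sym[of "snd a"])

lemma g_diff_left: "g_inner (a - b) c = g_inner a c - g_inner b c"
  by (simp add: g_inner_def matrix_diff_rdistrib trace_sub algebra_simps)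

lemma trace_cyc3: "trace ((A::real^'n^'n) ** B ** C) = trace (B ** C ** A)"
proof -
  have "trace (A ** B ** C) = trace (A ** (B ** C))" by (simp only: matrix_mul_assoc)
  also have "\<dots> = trace (B ** C ** A)" by (rule trace_mul_sym)
  finally show ?thesis .
qed

lemma g_ad: "g_inner (ad xi u) v + g_inner u (ad xi v) = 0"
proof -
  have t1: "trace ((fst xi ** fst u - fst u ** fst xi) ** fst v) + trace (fst u ** (fst xi ** fst v - fst v ** fst xi)) = 0"
    by (simp add: matrix_diff_rdistrib matrix_diff_ldistrib trace_sub matrix_mul_assoc
        trace_cyc3[of "fst xi" "fst u" "fst v"])
  have t2: "trace ((snd xi ** snd u - snd u ** snd xi) ** snd v) + trace (snd u ** (snd xi ** snd v - snd v ** snd xi)) = 0"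
    by (simp add: matrix_diff_rdistrib matrix_diff_ldistrib trace_sub matrix_mul_assoc
        trace_cyc3[of "snd xi" "snd u" "snd v"])
  show ?thesis using t1 t2 by (simp add: g_inner_def ad_def algebra_simps)
qed

context stf
begin

definition "pL w = (transpose (fst w) + fst w, transpose (snd w) + snd w,
   transpose X ** fst w ** X - 2 *\<^sub>R snd w, fst w - PX ** fst w - fst w ** PX + PX ** fst w ** PX)"

lemma linear_pL: "linear pL"
  by (rule linearI) (simp_all add: pL_def matrix_add_ldistrib matrix_add_rdistrib algebra_simps)

lemma pc_pL: "pc w \<longleftrightarrow> pL w = 0"
proof -
  have e: "(a = b + c - d) \<longleftrightarrow> (a - b - c + d = 0)" for a b c d :: "real^'n^'n"
    by (auto simp: algebra_simps)
  have e2: "(a = 2 *\<^sub>R b) \<longleftrightarrow> (a - 2 *\<^sub>R b = 0)" for a b :: "real^'k^'k"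
    by auto
  have e3: "(transpose a = - a) \<longleftrightarrow> (transpose a + a = 0)" for a :: "real^'m^'m"
    by (auto simp: eq_neg_iff_add_eq_0)
  show ?thesis unfolding pc_def skew_iff pL_def e e2 e3 by (simp add: zero_prod_def)
qed

lemma subspace_p: "subspace (pX X)"
  unfolding subspace_def
proof (intro conjI ballI allI)
  show "0 \<in> pX X" unfolding p_iff pc_pL using linear_0[OF linear_pL] .
  fix u v assume "u \<in> pX X" "v \<in> pX X"
  then show "u + v \<in> pX X" unfolding p_iff pc_pL using linear_add[OF linear_pL] by simp
next
  fix c u assume "u \<in> pX X"
  then show "c *\<^sub>R u \<in> pX X" unfolding p_iff pc_pL using linear_scale[OF linear_pL] by simp
qed

lemma pr_pc: assumes "fst u \<in> skew" "snd u \<in> skew" shows "pc (pr_p X u)"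
  using assms unfolding pc_def skew_iff
  by (simp add: pr_p_def Let_def matrix_transpose_mul matrix_add_ldistrib matrix_add_rdistrib
      matrix_diff_ldistrib matrix_diff_rdistrib XtX algebra_simps flip: matrix_mul_assoc)

lemma ad_skew: assumes "fst a \<in> skew" "snd a \<in> skew" "fst u \<in> skew" "snd u \<in> skew"
  shows "fst (ad a u) \<in> skew" "snd (ad a u) \<in> skew"
  using assms by (simp_all add: skew_iff ad_def matrix_transpose_mul)

lemma h_mem: assumes "fst u \<in> skew" "snd u \<in> skew" shows "u - pr_p X u \<in> hX X"
proof -
  obtain Om eta where u: "u = (Om, eta)" by (cases u)
  have s: "transpose Om = - Om" "transpose eta = - eta" using assms u by (auto simp: skew_iff)
  show ?thesis unfolding u hX_def skew_iff using s
    by (simp add: pr_p_def Let_def matrix_transpose_mul matrix_add_ldistrib matrix_add_rdistrib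
      matrix_diff_ldistrib matrix_diff_rdistrib XtX algebra_simps flip: matrix_mul_assoc)
qed

lemma g_pr: assumes "fst w \<in> skew" "snd w \<in> skew" and v: "v \<in> pX X"
  shows "g_inner (pr_p X w) v = g_inner w v"
proof -
  have "g_inner w v - g_inner (pr_p X w) v = g_inner (w - pr_p X w) v" by (simp add: g_diff_left)
  also have "\<dots> = g_inner v (w - pr_p X w)" by (rule g_sym)
  also have "\<dots> = 0" using v h_mem[OF assms(1,2)] by (auto simp: pX_def)
  finally show ?thesis by simp
qed

end

locale stfx = stf X for X :: "real^'k^'n" +
  fixes x1 :: "real^'n^'n" and x2 :: "real^'k^'k"
  assumes xi: "pc (x1, x2)"
begin

definition "Mop = (\<lambda>z. pr_p X (ad (x1, x2) z))"
definition "Mx = endo_of Mop"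
definition "Kop = (\<lambda>W. PperpX X (f_op (x1, x2) W))"
definition "Kx = endo_of Kop"

lemma xsk: "transpose x1 = - x1" "transpose x2 = - x2" "x1 \<in> skew" "x2 \<in> skew"
  using xi by (auto simp: pc_def skew_iff)

lemma linear_Mop: "linear Mop"
  unfolding Mop_def using linear_compose[OF linear_ad linear_pr] by (simp add: o_def)

lemma linear_f_op: "linear (f_op xi)"
  by (rule linearI) (simp_all add: f_op_def matrix_add_ldistrib matrix_add_rdistrib algebra_simps)

lemma linear_Pp: "linear (PperpX X)"
  by (rule linearI) (simp_all add: PperpX_def matrix_add_ldistrib matrix_add_rdistrib algebra_simps)

lemma linear_Kop: "linear Kop"
  unfolding Kop_def using linear_compose[OF linear_f_op linear_Pp] by (simp add: o_def)

lemma ap_Mx: "ap Mx z = Mop z" by (simp add: Mx_def ap_endo_of linear_Mop)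
lemma ap_Kx: "ap Kx z = Kop z" by (simp add: Kx_def ap_endo_of linear_Kop)

lemma p_skew: "w \<in> pX X \<Longrightarrow> fst w \<in> skew \<and> snd w \<in> skew"
  by (simp add: pX_def)

lemma Mx_p: assumes w: "w \<in> pX X" shows "ap Mx w \<in> pX X"
proof -
  have s: "fst w \<in> skew" "snd w \<in> skew" using p_skew[OF w] by auto
  have "fst (ad (x1, x2) w) \<in> skew" "snd (ad (x1, x2) w) \<in> skew"
    using ad_skew[of "(x1, x2)" w] xsk(3,4) s by auto
  then show ?thesis unfolding ap_Mx Mop_def p_iff by (rule pr_pc)
qed

lemma Mx_skew:
  assumes u: "u \<in> pX X" and v: "v \<in> pX X"
  shows "gi (ap Mx u) v + gi u (ap Mx v) = 0"
proof -
  have su: "fst u \<in> skew" "snd u \<in> skew" and sv: "fst v \<in> skew" "snd v \<in> skew"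
    using p_skew[OF u] p_skew[OF v] by auto
  have adu: "fst (ad (x1, x2) u) \<in> skew" "snd (ad (x1, x2) u) \<in> skew"
    using ad_skew[of "(x1, x2)" u] xsk su by auto
  have adv: "fst (ad (x1, x2) v) \<in> skew" "snd (ad (x1, x2) v) \<in> skew"
    using ad_skew[of "(x1, x2)" v] xsk sv by auto
  have pu: "pc (pr_p X (ad (x1, x2) u))" by (rule pr_pc[OF adu])
  have e1: "gi (ap Mx u) v = g_inner (ad (x1, x2) u) v"
  proof -
    have "gi (ap Mx u) v = g_inner (pr_p X (ad (x1, x2) u)) v"
      using pu by (simp add: ap_Mx Mop_def g_inner_skew gi_def pc_def)
    also have "\<dots> = g_inner (ad (x1, x2) u) v" by (rule g_pr[OF adu v])
    finally show ?thesis .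
  qed
  have e2: "gi u (ap Mx v) = g_inner u (ad (x1, x2) v)"
  proof -
    have "gi u (ap Mx v) = g_inner u (pr_p X (ad (x1, x2) v))"
      using su by (simp add: ap_Mx Mop_def g_inner_skew gi_def)
    also have "\<dots> = g_inner (pr_p X (ad (x1, x2) v)) u" by (rule g_sym)
    also have "\<dots> = g_inner (ad (x1, x2) v) u" by (rule g_pr[OF adv u])
    also have "\<dots> = g_inner u (ad (x1, x2) v)" by (rule g_sym)
    finally show ?thesis .
  qed
  show ?thesis using e1 e2 g_ad by simp
qed

lemma Kx_N: "ap Kx W \<in> orth (tanSt X)"
  by (simp add: ap_Kx Kop_def Pp_normal)

lemma Kx_skew: "W \<in> orth (tanSt X) \<Longrightarrow> W' \<in> orth (tanSt X) \<Longrightarrow> ap Kx W \<bullet> W' + W \<bullet> ap Kx W' = 0"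
  unfolding ap_Kx Kop_def by (rule K_skew[OF xsk(1,2)])

end


lemma exp_ap_fix: "ap x v = 0 \<Longrightarrow> ap (exp x) v = v"
proof -
  assume h: "ap x v = 0"
  have z: "(1 / fact n) *\<^sub>R ap (x ^ n) v = 0" if nn: "n \<notin> {0}" for n
  proof -
    obtain m where "n = Suc m" using nn by (cases n) auto
    then have "ap (x ^ n) v = ap (x ^ m) (ap x v)" by (simp only: power_Suc2 ap_mult)
    then show ?thesis by (simp add: h bounded_bilinear.zero_right[OF bounded_bilinear_ap])
  qed
  show ?thesis unfolding ap_exp by (subst suminf_finite[of "{0}"]) (use z in auto)
qed

lemma exp_ap_inverse2: "ap (exp x) (ap (exp (- x)) v) = v"
  using exp_ap_inverse[of "- x" v] by simp

lemma bounded_linear_of_linear: "linear (f::'a::euclidean_space \<Rightarrow> 'b::real_normed_vector) \<Longrightarrow> bounded_linear f"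
  using linear_conv_bounded_linear by blast

context stfx
begin

abbreviation "aa t \<equiv> mexp (t *\<^sub>R x1)"
abbreviation "bb t \<equiv> mexp (t *\<^sub>R x2)"

lemma orth_aa: "orthm (aa t)" by (rule orthm_mexp[OF xsk(1)])
lemma orth_bb: "orthm (bb t)" by (rule orthm_mexp[OF xsk(2)])

lemma gamma_Phi: "mexp (t *\<^sub>R x1) ** X ** mexp (- t *\<^sub>R x2) = Phi (aa t, bb t) X"
proof -
  have "transpose (bb t) = mexp (- t *\<^sub>R x2)"
    by (simp add: transpose_mexp xsk(2))
  then show ?thesis by (simp add: Phi_def)
qed

definition "Fa t V = Phi (aa t, bb t) (dI X (ap (exp (((-1/2) * t) *\<^sub>R Mx)) (Lp X V)))"
definition "Fa' t V = Phi (aa t, bb t) (f_op (x1, x2) (dI X (ap (exp (((-1/2) * t) *\<^sub>R Mx)) (Lp X V)))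
     + dI X ((-1/2) *\<^sub>R ap Mx (ap (exp (((-1/2) * t) *\<^sub>R Mx)) (Lp X V))))"
definition "Ga t W = dI X (ap (exp (((1/2) * t) *\<^sub>R Mx)) (Lp X (Phi (transpose (aa t), transpose (bb t)) W)))"

lemma bl_Lp: "bounded_linear (Lp X)" by (rule bounded_linear_of_linear[OF linear_Lp])
lemma bl_dI: "bounded_linear (dI X)" by (rule bounded_linear_of_linear[OF linear_dI])

lemma linear_Fa: "linear (Fa t)"
proof -
  have "Fa t = Phi (aa t, bb t) \<circ> dI X \<circ> ap (exp (((-1/2) * t) *\<^sub>R Mx)) \<circ> Lp X"
    by (simp add: Fa_def fun_eq_iff)
  then show ?thesis
    by (simp add: linear_compose linear_Phi linear_dI linear_ap linear_Lp)
qed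

lemma Fa_deriv:
  assumes dz: "(z has_vector_derivative z') (at t)"
  shows "((\<lambda>s. Fa s (z s)) has_vector_derivative (Fa' t (z t) + Fa t z')) (at t)"
proof -
  have d1: "((\<lambda>s. Lp X (z s)) has_vector_derivative Lp X z') (at t)"
    by (rule bounded_linear.has_vector_derivative[OF bl_Lp dz])
  have d2: "((\<lambda>s. ap (exp (((-1/2) * s) *\<^sub>R Mx)) (Lp X (z s))) has_vector_derivative
      ((-1/2) *\<^sub>R ap Mx (ap (exp (((-1/2) * t) *\<^sub>R Mx)) (Lp X (z t))) + ap (exp (((-1/2) * t) *\<^sub>R Mx)) (Lp X z'))) (at t)"
    by (rule exp_ap_has_vd[OF d1])
  have d3: "((\<lambda>s. dI X (ap (exp (((-1/2) * s) *\<^sub>R Mx)) (Lp X (z s)))) has_vector_derivative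
      dI X ((-1/2) *\<^sub>R ap Mx (ap (exp (((-1/2) * t) *\<^sub>R Mx)) (Lp X (z t))) + ap (exp (((-1/2) * t) *\<^sub>R Mx)) (Lp X z'))) (at t)"
    by (rule bounded_linear.has_vector_derivative[OF bl_dI d2])
  note d4 = PhD[OF xsk(2) d3, of x1]
  show ?thesis unfolding Fa_def
    by (rule has_vector_derivative_eq_rhs[OF d4])
       (simp add: Fa'_def linear_add[OF linear_dI] linear_add[OF linear_Phi] linear_diff[OF linear_dI]
         linear_diff[OF linear_Phi] linear_neg[OF linear_dI] linear_neg[OF linear_Phi] algebra_simps)
qed

lemma E_p: "u \<in> pX X \<Longrightarrow> ap (exp (c *\<^sub>R Mx)) u \<in> pX X"
  by (rule exp_ap_in_subspace[OF subspace_p]) (simp_all add: subspace_mul[OF subspace_p] Mx_p)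

lemma E_inv: "ap (exp (((1/2) * t) *\<^sub>R Mx)) (ap (exp (((-1/2) * t) *\<^sub>R Mx)) u) = u"
  "ap (exp (((-1/2) * t) *\<^sub>R Mx)) (ap (exp (((1/2) * t) *\<^sub>R Mx)) u) = u"
proof -
  have "- (((-1/2) * t) *\<^sub>R Mx) = ((1/2) * t) *\<^sub>R Mx" by simp
  then show "ap (exp (((1/2) * t) *\<^sub>R Mx)) (ap (exp (((-1/2) * t) *\<^sub>R Mx)) u) = u"
    using exp_ap_inverse[of "((-1/2) * t) *\<^sub>R Mx" u] by simp
  have "- (((1/2) * t) *\<^sub>R Mx) = ((-1/2) * t) *\<^sub>R Mx" by simp
  then show "ap (exp (((-1/2) * t) *\<^sub>R Mx)) (ap (exp (((1/2) * t) *\<^sub>R Mx)) u) = u"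
    using exp_ap_inverse[of "((1/2) * t) *\<^sub>R Mx" u] by simp
qed

lemma p_pc: "w \<in> pX X \<Longrightarrow> pc w" by (simp add: p_iff)

lemma Ga_deriv:
  assumes dy: "(y has_vector_derivative y') (at t)"
  shows "\<exists>z'. ((\<lambda>s. Ga s (y s)) has_vector_derivative z') (at t)"
proof -
  have da: "((\<lambda>s. transpose (aa s)) has_vector_derivative transpose (x1 ** aa t)) (at t)"
    by (rule bounded_linear.has_vector_derivative[OF bounded_linear_transpose mexp_has_vd])
  have db: "((\<lambda>s. bb s) has_vector_derivative x2 ** bb t) (at t)" by (rule mexp_has_vd)
  have d1: "((\<lambda>s. transpose (aa s) ** y s ** bb s) has_vector_derivative
     (transpose (aa t) ** y t ** (x2 ** bb t) + (transpose (aa t) ** y' + transpose (x1 ** aa t) ** y t) ** bb t)) (at t)"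
    by (rule has_vd_mm[OF has_vd_mm[OF da dy] db])
  have e: "Phi (transpose (aa s), transpose (bb s)) Y = transpose (aa s) ** Y ** bb s" for s Y
    by (simp add: Phi_def)
  note d2 = bounded_linear.has_vector_derivative[OF bl_Lp d1]
  note d3 = exp_ap_has_vd[OF d2, of "1/2" Mx]
  note d4 = bounded_linear.has_vector_derivative[OF bl_dI d3]
  show ?thesis unfolding Ga_def e using d4 by blast
qed

lemma Fa_p: "V \<in> tanSt X \<Longrightarrow> ap (exp (((-1/2) * t) *\<^sub>R Mx)) (Lp X V) \<in> pX X"
  by (rule E_p) (simp add: p_iff pc_Lp)

lemma Fa_w: "Fa t V = Phi (aa t, bb t) (dI X (ap (exp (((-1/2) * t) *\<^sub>R Mx)) (Lp X V)))"
  by (simp add: Fa_def)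

lemma GaFa: assumes V: "V \<in> tanSt X" shows "Ga t (Fa t V) = V"
proof -
  define w where "w = ap (exp (((-1/2) * t) *\<^sub>R Mx)) (Lp X V)"
  have w: "w \<in> pX X" unfolding w_def by (rule Fa_p[OF V])
  have e: "ap (exp (((1/2) * t) *\<^sub>R Mx)) w = Lp X V"
    by (simp add: w_def exp_ap_inverse exp_ap_inverse2)
  have "Ga t (Fa t V) = dI X (ap (exp (((1/2) * t) *\<^sub>R Mx)) (Lp X (dI X w)))"
    by (simp only: Ga_def Fa_w w_def[symmetric] Phi_inv1[OF orth_aa orth_bb])
  also have "\<dots> = V" by (simp only: Lp_dI[OF p_pc[OF w]] e dI_Lp[OF V])
  finally show ?thesis .
qed

lemma Fa_tan: assumes V: "V \<in> tanSt X" shows "Fa t V \<in> tanSt (Phi (aa t, bb t) X)"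
  unfolding Fa_def
  by (rule Phi_tan[OF orth_aa], rule dI_tan) (use p_skew[OF Fa_p[OF V]] in auto)

lemma Ga_tan: assumes W: "W \<in> tanSt (Phi (aa t, bb t) X)"
  shows "Ga t W \<in> tanSt X" "Fa t (Ga t W) = W"
proof -
  have "Phi (transpose (aa t), transpose (bb t)) W \<in> tanSt (Phi (transpose (aa t), transpose (bb t)) (Phi (aa t, bb t) X))"
    by (rule Phi_tan[OF orthm_transpose[OF orth_aa] W])
  then have W': "Phi (transpose (aa t), transpose (bb t)) W \<in> tanSt X"
    by (simp add: Phi_inv1[OF orth_aa orth_bb])
  define u where "u = ap (exp (((1/2) * t) *\<^sub>R Mx)) (Lp X (Phi (transpose (aa t), transpose (bb t)) W))"
  have u: "u \<in> pX X" unfolding u_def by (rule E_p) (simp add: p_iff pc_Lp[OF W'])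
  have G: "Ga t W = dI X u" by (simp only: Ga_def u_def)
  show "Ga t W \<in> tanSt X" unfolding G using p_skew[OF u] by (intro dI_tan) auto
  have e: "ap (exp (((-1/2) * t) *\<^sub>R Mx)) u = Lp X (Phi (transpose (aa t), transpose (bb t)) W)"
    by (simp add: u_def exp_ap_inverse exp_ap_inverse2)
  show "Fa t (Ga t W) = W"
    by (simp only: G Fa_w Lp_dI[OF p_pc[OF u]] e dI_Lp[OF W'] Phi_inv2[OF orth_aa orth_bb])
qed

lemma Fa'_normal: assumes V: "V \<in> tanSt X" shows "Fa' t V \<in> orth (tanSt (Phi (aa t, bb t) X))"
proof -
  define w where "w = ap (exp (((-1/2) * t) *\<^sub>R Mx)) (Lp X V)"
  have w: "w \<in> pX X" unfolding w_def by (rule Fa_p[OF V])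
  have pw: "pc (fst w, snd w)" using p_pc[OF w] by simp
  have F': "Fa' t V = Phi (aa t, bb t) (f_op (x1, x2) (dI X w) + dI X ((-1/2) *\<^sub>R ap Mx w))"
    by (simp only: Fa'_def w_def)
  have "dI X (ap Mx w) = dI X (ad (x1, x2) (fst w, snd w))"
    by (simp add: ap_Mx Mop_def dI_pr)
  then have "f_op (x1, x2) (dI X w) + dI X ((-1/2) *\<^sub>R ap Mx w)
      = (1/2) *\<^sub>R (2 *\<^sub>R f_op (x1, x2) (dI X (fst w, snd w)) - dI X (ad (x1, x2) (fst w, snd w)))"
    by (simp add: linear_scale[OF linear_dI] linear_neg[OF linear_dI] algebra_simps)
  also have "\<dots> \<in> orth (tanSt X)"
    by (rule subspace_mul[OF subspace_orth], rule LCid[OF xi pw])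
  finally show ?thesis unfolding F' by (rule Phi_normal[OF orth_aa orth_bb])
qed

lemma dI_inner: assumes u: "u \<in> pX X" and v: "v \<in> pX X"
  shows "2 * (dI X u \<bullet> dI X v) = gi u v"
proof -
  have tu: "dI X u \<in> tanSt X" and tv: "dI X v \<in> tanSt X"
    using p_skew[OF u] p_skew[OF v] by (auto intro: dI_tan)
  show ?thesis using gi_Lp[OF tu tv] by (simp add: Lp_dI[OF p_pc[OF u]] Lp_dI[OF p_pc[OF v]])
qed

lemma Fa_inner: assumes u: "u \<in> tanSt X" and v: "v \<in> tanSt X"
  shows "Fa t u \<bullet> Fa t v = u \<bullet> v"
proof -
  define wu where "wu = ap (exp (((-1/2) * t) *\<^sub>R Mx)) (Lp X u)"
  define wv where "wv = ap (exp (((-1/2) * t) *\<^sub>R Mx)) (Lp X v)"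
  have pu: "wu \<in> pX X" unfolding wu_def by (rule Fa_p[OF u])
  have pv: "wv \<in> pX X" unfolding wv_def by (rule Fa_p[OF v])
  have "2 * (Fa t u \<bullet> Fa t v) = 2 * (dI X wu \<bullet> dI X wv)"
    by (simp only: Fa_w wu_def[symmetric] wv_def[symmetric] Phi_inner[OF orth_aa orth_bb])
  also have "\<dots> = gi wu wv" by (rule dI_inner[OF pu pv])
  also have "\<dots> = gi (Lp X u) (Lp X v)"
    unfolding wu_def wv_def
    by (rule exp_ap_isometry[OF bounded_bilinear_gi subspace_p Mx_p Mx_skew])
       (simp_all add: p_iff pc_Lp u v)
  also have "\<dots> = 2 * (u \<bullet> v)" by (rule gi_Lp[OF u v])
  finally show ?thesis by simp
qed

end

context stfx
begin

definition "Fn t V = Phi (aa t, bb t) (ap (exp (((-1) * t) *\<^sub>R Kx)) V)"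
definition "Fn' t V = Phi (aa t, bb t) (f_op (x1, x2) (ap (exp (((-1) * t) *\<^sub>R Kx)) V)
     + (-1) *\<^sub>R ap Kx (ap (exp (((-1) * t) *\<^sub>R Kx)) V))"
definition "Gn t W = ap (exp ((1 * t) *\<^sub>R Kx)) (Phi (transpose (aa t), transpose (bb t)) W)"

lemma EN_N: "V \<in> orth (tanSt X) \<Longrightarrow> ap (exp (c *\<^sub>R Kx)) V \<in> orth (tanSt X)"
  by (rule exp_ap_in_subspace[OF subspace_orth]) (simp_all add: subspace_mul[OF subspace_orth] Kx_N)

lemma linear_Fn: "linear (Fn t)"
proof -
  have "Fn t = Phi (aa t, bb t) \<circ> ap (exp (((-1) * t) *\<^sub>R Kx))"
    by (simp add: Fn_def fun_eq_iff)
  then show ?thesis by (simp add: linear_compose linear_Phi linear_ap)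
qed

lemma Fn_deriv:
  assumes dz: "(z has_vector_derivative z') (at t)"
  shows "((\<lambda>s. Fn s (z s)) has_vector_derivative (Fn' t (z t) + Fn t z')) (at t)"
proof -
  note d2 = exp_ap_has_vd[OF dz, of "-1" Kx]
  note d4 = PhD[OF xsk(2) d2, of x1]
  show ?thesis unfolding Fn_def
    by (rule has_vector_derivative_eq_rhs[OF d4])
       (simp add: Fn'_def linear_add[OF linear_Phi] linear_diff[OF linear_Phi] algebra_simps)
qed

lemma Gn_deriv:
  assumes dy: "(y has_vector_derivative y') (at t)"
  shows "\<exists>z'. ((\<lambda>s. Gn s (y s)) has_vector_derivative z') (at t)"
proof -
  have da: "((\<lambda>s. transpose (aa s)) has_vector_derivative transpose (x1 ** aa t)) (at t)"
    by (rule bounded_linear.has_vector_derivative[OF bounded_linear_transpose mexp_has_vd])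
  have db: "((\<lambda>s. bb s) has_vector_derivative x2 ** bb t) (at t)" by (rule mexp_has_vd)
  have d1: "((\<lambda>s. transpose (aa s) ** y s ** bb s) has_vector_derivative
     (transpose (aa t) ** y t ** (x2 ** bb t) + (transpose (aa t) ** y' + transpose (x1 ** aa t) ** y t) ** bb t)) (at t)"
    by (rule has_vd_mm[OF has_vd_mm[OF da dy] db])
  have e: "Phi (transpose (aa s), transpose (bb s)) Y = transpose (aa s) ** Y ** bb s" for s Y
    by (simp add: Phi_def)
  note d3 = exp_ap_has_vd[OF d1, of 1 Kx]
  show ?thesis unfolding Gn_def e using d3 by blast
qed

lemma Fn_N: assumes V: "V \<in> orth (tanSt X)" shows "Fn t V \<in> orth (tanSt (Phi (aa t, bb t) X))"
  unfolding Fn_def by (rule Phi_normal[OF orth_aa orth_bb EN_N[OF V]])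

lemma GnFn: assumes V: "V \<in> orth (tanSt X)" shows "Gn t (Fn t V) = V"
  by (simp add: Gn_def Fn_def Phi_inv1[OF orth_aa orth_bb] exp_ap_inverse exp_ap_inverse2)

lemma Gn_N: assumes W: "W \<in> orth (tanSt (Phi (aa t, bb t) X))"
  shows "Gn t W \<in> orth (tanSt X)" "Fn t (Gn t W) = W"
proof -
  have "Phi (transpose (aa t), transpose (bb t)) W \<in> orth (tanSt (Phi (transpose (aa t), transpose (bb t)) (Phi (aa t, bb t) X)))"
    by (rule Phi_normal[OF orthm_transpose[OF orth_aa] orthm_transpose[OF orth_bb] W])
  then have W': "Phi (transpose (aa t), transpose (bb t)) W \<in> orth (tanSt X)"
    by (simp add: Phi_inv1[OF orth_aa orth_bb])
  show "Gn t W \<in> orth (tanSt X)" unfolding Gn_def by (rule EN_N[OF W'])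
  show "Fn t (Gn t W) = W"
    by (simp add: Gn_def Fn_def Phi_inv2[OF orth_aa orth_bb] exp_ap_inverse exp_ap_inverse2)
qed

lemma Fn'_tan: assumes V: "V \<in> orth (tanSt X)" shows "Fn' t V \<in> orth (orth (tanSt (Phi (aa t, bb t) X)))"
proof -
  define w where "w = ap (exp (((-1) * t) *\<^sub>R Kx)) V"
  have "f_op (x1, x2) w + (-1) *\<^sub>R ap Kx w = f_op (x1, x2) w - PperpX X (f_op (x1, x2) w)"
    by (simp add: ap_Kx Kop_def)
  also have "\<dots> \<in> tanSt X" by (rule Pp_tan)
  finally have "Fn' t V \<in> tanSt (Phi (aa t, bb t) X)"
    unfolding Fn'_def w_def[symmetric] by (rule Phi_tan[OF orth_aa])
  then show ?thesis by (simp add: orth_orth[OF subspace_tanSt])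
qed

lemma Fn_inner: assumes u: "u \<in> orth (tanSt X)" and v: "v \<in> orth (tanSt X)"
  shows "Fn t u \<bullet> Fn t v = u \<bullet> v"
  unfolding Fn_def Phi_inner[OF orth_aa orth_bb]
  by (rule exp_ap_isometry[OF bounded_bilinear_inner subspace_orth Kx_N Kx_skew u v])

end

context stfx
begin

lemma d1_eq: "frechet_derivative (iota_pi X) (at (mat 1, mat 1)) h = X ** transpose (snd h) + fst h ** X"
  by (simp add: iota_fd)

lemma d1_p: "h \<in> pX X \<Longrightarrow> frechet_derivative (iota_pi X) (at (mat 1, mat 1)) h = dI X h"
  using p_skew[of h] by (simp add: d1_eq dI_def skew_iff)

lemma inv_d1: assumes V: "V \<in> tanSt X"
  shows "inv_into (pX X) (frechet_derivative (iota_pi X) (at (mat 1, mat 1))) V = Lp X V"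
proof (rule inv_into_f_eq)
  show "inj_on (frechet_derivative (iota_pi X) (at (mat 1, mat 1))) (pX X)"
  proof (rule inj_onI)
    fix h h' assume h: "h \<in> pX X" and h': "h' \<in> pX X"
      and e: "frechet_derivative (iota_pi X) (at (mat 1, mat 1)) h = frechet_derivative (iota_pi X) (at (mat 1, mat 1)) h'"
    then have "dI X h = dI X h'" by (simp add: d1_p)
    then have "Lp X (dI X h) = Lp X (dI X h')" by simp
    then show "h = h'" by (simp add: Lp_dI p_pc h h')
  qed
  show "Lp X V \<in> pX X" by (simp add: p_iff pc_Lp[OF V])
  show "frechet_derivative (iota_pi X) (at (mat 1, mat 1)) (Lp X V) = V"
    by (simp add: d1_p p_iff pc_Lp[OF V] dI_Lp[OF V])
qed

lemma opM: "op_exp (\<lambda>\<zeta>. c *\<^sub>R pr_p X (ad (x1, x2) \<zeta>)) v = ap (exp (c *\<^sub>R Mx)) v"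
  using op_exp_scaled[OF linear_Mop, of c v] unfolding Mx_def Mop_def .

lemma opK: "op_exp (\<lambda>W. c *\<^sub>R PperpX X (f_op (x1, x2) W)) v = ap (exp (c *\<^sub>R Kx)) v"
  using op_exp_scaled[OF linear_Kop, of c v] unfolding Kx_def Kop_def .

lemma A_eq: assumes V: "V \<in> tanSt X"
  shows "frechet_derivative (iota_pi X) (at (mexp (t *\<^sub>R x1), mexp (t *\<^sub>R x2)))
          (frechet_derivative (gmul (mexp (t *\<^sub>R x1), mexp (t *\<^sub>R x2))) (at (mat 1, mat 1))
            (op_exp (\<lambda>\<zeta>. (- t / 2) *\<^sub>R pr_p X (ad (x1, x2) \<zeta>))
              (inv_into (pX X) (frechet_derivative (iota_pi X) (at (mat 1, mat 1))) V))) = Fa t V"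
proof -
  define w where "w = ap (exp (((-1/2) * t) *\<^sub>R Mx)) (Lp X V)"
  have w: "w \<in> pX X" unfolding w_def by (rule Fa_p[OF V])
  have sw: "transpose (snd w) = - snd w" using p_skew[OF w] by (simp add: skew_iff)
  have e1: "op_exp (\<lambda>\<zeta>. (- t / 2) *\<^sub>R pr_p X (ad (x1, x2) \<zeta>))
              (inv_into (pX X) (frechet_derivative (iota_pi X) (at (mat 1, mat 1))) V) = w"
    unfolding inv_d1[OF V] opM w_def by simp
  show ?thesis
    unfolding e1 Fa_w w_def[symmetric]
    using sw by (simp add: iota_fd gmul_fd gmul_def Phi_def dI_def matrix_transpose_mul
        matrix_diff_ldistrib matrix_diff_rdistrib matrix_mul_assoc)
qed

lemma C_eq: "Phi (mexp (t *\<^sub>R x1), mexp (t *\<^sub>R x2)) (op_exp (\<lambda>W. (- t) *\<^sub>R PperpX X (f_op (x1, x2) W)) V) = Fn t V"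
  unfolding opK Fn_def by simp

end

lemma eucl_inner: "eucl_metric V W = 2 * (V \<bullet> W)"
  by (simp add: eucl_metric_def trace_tr)

context stfx
begin

lemma X_st: "X \<in> Stiefel" by (simp add: Stiefel_def XtX)

lemma gf: "(\<lambda>t. mexp (t *\<^sub>R x1) ** X ** mexp (- t *\<^sub>R x2)) = (\<lambda>t. Phi (aa t, bb t) X)"
  by (intro ext gamma_Phi)

lemma V0_tan: "x1 ** X - X ** x2 \<in> tanSt X"
proof -
  have "dI X (x1, x2) \<in> tanSt X" by (rule dI_tan) (simp_all add: xsk)
  then show ?thesis by (simp add: dI_def)
qed

lemma Fa_V0: "Fa t (x1 ** X - X ** x2) = Phi (aa t, bb t) (x1 ** X - X ** x2)"
proof -
  have L: "Lp X (x1 ** X - X ** x2) = (x1, x2)"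
    using Lp_dI[OF xi] by (simp add: dI_def)
  have a0: "ad (x1, x2) (x1, x2) = 0" by (simp add: ad_def zero_prod_def)
  have z: "ap (((-1/2) * t) *\<^sub>R Mx) (x1, x2) = 0"
    by (simp only: ap_scaleR_left ap_Mx Mop_def a0 linear_0[OF linear_pr] scaleR_zero_right)
  show ?thesis by (simp only: Fa_w L exp_ap_fix[OF z]) (simp add: dI_def)
qed

lemma rolling_gen:
  assumes I: "open I"
    and A: "\<And>t V. V \<in> tanSt X \<Longrightarrow> A t V = Fa t V"
    and C: "\<And>t V. C t V = Fn t V"
  shows "extrinsic_rolling (tanSt X) (\<lambda>_. tanSt X) Stiefel tanSt I
           (\<lambda>t. t *\<^sub>R (x1 ** X - X ** x2)) (\<lambda>t. mexp (t *\<^sub>R x1) ** X ** mexp (- t *\<^sub>R x2)) A C"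
  unfolding gf extrinsic_rolling_def
proof (intro conjI ballI allI impI)
  fix t assume t: "t \<in> I"
  show "t *\<^sub>R (x1 ** X - X ** x2) \<in> tanSt X" by (rule subspace_mul[OF subspace_tanSt V0_tan])
  show "Phi (aa t, bb t) X \<in> Stiefel" by (rule Phi_stiefel[OF orth_aa orth_bb X_st])
  show "lin_isom_on (A t) (tanSt X) (tanSt (Phi (aa t, bb t) X))"
    unfolding lin_isom_on_def
  proof (intro conjI ballI allI)
    fix u v assume u: "u \<in> tanSt X" and v: "v \<in> tanSt X"
    show "A t (u + v) = A t u + A t v"
      using subspace_add[OF subspace_tanSt u v] u v by (simp add: A linear_add[OF linear_Fa])
    show "eucl_metric (A t u) (A t v) = eucl_metric u v"
      using u v by (simp add: A eucl_inner Fa_inner)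
  next
    fix c u assume u: "u \<in> tanSt X"
    show "A t (c *\<^sub>R u) = c *\<^sub>R A t u"
      using subspace_mul[OF subspace_tanSt u] u by (simp add: A linear_scale[OF linear_Fa])
  next
    show "A t ` tanSt X = tanSt (Phi (aa t, bb t) X)"
    proof
      show "A t ` tanSt X \<subseteq> tanSt (Phi (aa t, bb t) X)" using Fa_tan by (auto simp: A)
      show "tanSt (Phi (aa t, bb t) X) \<subseteq> A t ` tanSt X"
      proof
        fix W assume W: "W \<in> tanSt (Phi (aa t, bb t) X)"
        have "W = A t (Ga t W)" using Ga_tan[OF W] by (simp add: A)
        then show "W \<in> A t ` tanSt X" using Ga_tan(1)[OF W] by blast
      qed
    qed
  qed
  show "lin_isom_on (C t) (orth (tanSt X)) (orth (tanSt (Phi (aa t, bb t) X)))"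
    unfolding lin_isom_on_def
  proof (intro conjI ballI allI)
    fix u v assume u: "u \<in> orth (tanSt X)" and v: "v \<in> orth (tanSt X)"
    show "C t (u + v) = C t u + C t v" by (simp add: C linear_add[OF linear_Fn])
    show "eucl_metric (C t u) (C t v) = eucl_metric u v"
      using u v by (simp add: C eucl_inner Fn_inner)
  next
    fix c u assume u: "u \<in> orth (tanSt X)"
    show "C t (c *\<^sub>R u) = c *\<^sub>R C t u" by (simp add: C linear_scale[OF linear_Fn])
  next
    show "C t ` orth (tanSt X) = orth (tanSt (Phi (aa t, bb t) X))"
    proof
      show "C t ` orth (tanSt X) \<subseteq> orth (tanSt (Phi (aa t, bb t) X))" using Fn_N by (auto simp: C)
      show "orth (tanSt (Phi (aa t, bb t) X)) \<subseteq> C t ` orth (tanSt X)"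
      proof
        fix W assume W: "W \<in> orth (tanSt (Phi (aa t, bb t) X))"
        have "W = C t (Gn t W)" using Gn_N[OF W] by (simp add: C)
        then show "W \<in> C t ` orth (tanSt X)" using Gn_N(1)[OF W] by blast
      qed
    qed
  qed
next
  show "\<exists>\<alpha>' \<alpha>h'. \<forall>t\<in>I. ((\<lambda>t. t *\<^sub>R (x1 ** X - X ** x2)) has_vector_derivative \<alpha>' t) (at t within I) \<and>
      ((\<lambda>t. Phi (aa t, bb t) X) has_vector_derivative \<alpha>h' t) (at t within I) \<and> \<alpha>h' t = A t (\<alpha>' t)"
  proof (intro exI ballI conjI)
    fix t assume t: "t \<in> I"
    show "((\<lambda>t. t *\<^sub>R (x1 ** X - X ** x2)) has_vector_derivative (\<lambda>_. x1 ** X - X ** x2) t) (at t within I)"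
      using bounded_linear.has_vector_derivative[OF bounded_linear_scaleR_left has_vector_derivative_id,
          of "x1 ** X - X ** x2" "at t within I"] by simp
    have "((\<lambda>s. Phi (aa s, bb s) ((\<lambda>_. X) s)) has_vector_derivative Phi (aa t, bb t) (f_op (x1, x2) X + 0)) (at t)"
      by (rule PhD[OF xsk(2) has_vector_derivative_const])
    then show "((\<lambda>t. Phi (aa t, bb t) X) has_vector_derivative (\<lambda>t. Phi (aa t, bb t) (x1 ** X - X ** x2)) t) (at t within I)"
      by (simp add: f_op_def has_vector_derivative_at_within)
    show "(\<lambda>t. Phi (aa t, bb t) (x1 ** X - X ** x2)) t = A t ((\<lambda>_. x1 ** X - X ** x2) t)"
      by (simp add: A V0_tan Fa_V0)
  qed
next
  fix Z assume ZS: "\<forall>t\<in>I. Z t \<in> tanSt X"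
  show "parallel_along tanSt I (\<lambda>t. Phi (aa t, bb t) X) (\<lambda>t. A t (Z t)) =
        parallel_along (\<lambda>_. tanSt X) I (\<lambda>t. t *\<^sub>R (x1 ** X - X ** x2)) Z"
    unfolding parallel_along_def
    by (rule transport_iff[where F=Fa and G=Ga and F'=Fa' and W="\<lambda>t. tanSt (Phi (aa t, bb t) X)"])
       (use I ZS in \<open>auto simp: subspace_tanSt Fa_deriv Ga_deriv linear_Fa GaFa Fa_tan Fa'_normal A\<close>)
next
  fix Z assume ZS: "\<forall>t\<in>I. Z t \<in> orth (tanSt X)"
  show "normal_parallel_along tanSt I (\<lambda>t. Phi (aa t, bb t) X) (\<lambda>t. C t (Z t)) =
        normal_parallel_along (\<lambda>_. tanSt X) I (\<lambda>t. t *\<^sub>R (x1 ** X - X ** x2)) Z"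
    unfolding normal_parallel_along_def
    by (rule transport_iff[where F=Fn and G=Gn and F'=Fn' and W="\<lambda>t. orth (tanSt (Phi (aa t, bb t) X))"])
       (use I ZS in \<open>auto simp: subspace_orth Fn_deriv Gn_deriv linear_Fn GnFn Fn_N Fn'_tan C\<close>)
qed

lemma geodesic: "geodesic_St I (\<lambda>t. mexp (t *\<^sub>R x1) ** X ** mexp (- t *\<^sub>R x2))"
  unfolding gf geodesic_St_def
proof (intro conjI ballI exI)
  fix t assume t: "t \<in> I"
  show "Phi (aa t, bb t) X \<in> Stiefel" by (rule Phi_stiefel[OF orth_aa orth_bb X_st])
  have "((\<lambda>s. Phi (aa s, bb s) ((\<lambda>_. X) s)) has_vector_derivative Phi (aa t, bb t) (f_op (x1, x2) X + 0)) (at t)"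
    by (rule PhD[OF xsk(2) has_vector_derivative_const])
  then show "((\<lambda>t. Phi (aa t, bb t) X) has_vector_derivative (\<lambda>t. Phi (aa t, bb t) (f_op (x1, x2) X)) t) (at t within I)"
    by (simp add: has_vector_derivative_at_within)
  have "((\<lambda>s. Phi (aa s, bb s) ((\<lambda>_. f_op (x1, x2) X) s)) has_vector_derivative
      Phi (aa t, bb t) (f_op (x1, x2) (f_op (x1, x2) X) + 0)) (at t)"
    by (rule PhD[OF xsk(2) has_vector_derivative_const])
  then show "((\<lambda>t. Phi (aa t, bb t) (f_op (x1, x2) X)) has_vector_derivative
      (\<lambda>t. Phi (aa t, bb t) (f_op (x1, x2) (f_op (x1, x2) X))) t) (at t within I)"
    by (simp add: has_vector_derivative_at_within)
  show "(\<lambda>t. Phi (aa t, bb t) (f_op (x1, x2) (f_op (x1, x2) X))) t \<in> orth (tanSt (Phi (aa t, bb t) X))"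
    by (rule Phi_normal[OF orth_aa orth_bb geo_id[OF xi]])
qed

end

theorem corollary5p19:
  fixes X :: "real^'k^'n" and \<xi>1 :: "real^'n^'n" and \<xi>2 :: "real^'k^'k"
    and I :: "real set"
  assumes "(\<xi>1, \<xi>2) \<in> pX X"
    and "X \<in> Stiefel"
    and "is_interval I" and "open I"
  shows "extrinsic_rolling (tanSt X) (\<lambda>_. tanSt X) Stiefel tanSt I
           (\<lambda>t. t *\<^sub>R (\<xi>1 ** X - X ** \<xi>2))
           (\<lambda>t. mexp (t *\<^sub>R \<xi>1) ** X ** mexp (- t *\<^sub>R \<xi>2))
           (\<lambda>t V. frechet_derivative (iota_pi X) (at (mexp (t *\<^sub>R \<xi>1), mexp (t *\<^sub>R \<xi>2)))
                    (frechet_derivative (gmul (mexp (t *\<^sub>R \<xi>1), mexp (t *\<^sub>R \<xi>2)))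
                        (at (mat 1, mat 1))
                      (op_exp (\<lambda>\<zeta>. (- t / 2) *\<^sub>R pr_p X (ad (\<xi>1, \<xi>2) \<zeta>))
                        (inv_into (pX X) (frechet_derivative (iota_pi X) (at (mat 1, mat 1))) V))))
           (\<lambda>t V. Phi (mexp (t *\<^sub>R \<xi>1), mexp (t *\<^sub>R \<xi>2))
                    (op_exp (\<lambda>W. (- t) *\<^sub>R PperpX X (f_op (\<xi>1, \<xi>2) W)) V))
         \<and> geodesic_St I (\<lambda>t. mexp (t *\<^sub>R \<xi>1) ** X ** mexp (- t *\<^sub>R \<xi>2))"
proof -
  interpret S: stf X using assms(2) by unfold_locales (simp add: Stiefel_def)
  interpret stfx X \<xi>1 \<xi>2 using assms(1) by unfold_locales (simp add: S.p_iff)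
  show ?thesis
  proof
    show "geodesic_St I (\<lambda>t. mexp (t *\<^sub>R \<xi>1) ** X ** mexp (- t *\<^sub>R \<xi>2))" by (rule geodesic)
    show "extrinsic_rolling (tanSt X) (\<lambda>_. tanSt X) Stiefel tanSt I
           (\<lambda>t. t *\<^sub>R (\<xi>1 ** X - X ** \<xi>2))
           (\<lambda>t. mexp (t *\<^sub>R \<xi>1) ** X ** mexp (- t *\<^sub>R \<xi>2))
           (\<lambda>t V. frechet_derivative (iota_pi X) (at (mexp (t *\<^sub>R \<xi>1), mexp (t *\<^sub>R \<xi>2)))
                    (frechet_derivative (gmul (mexp (t *\<^sub>R \<xi>1), mexp (t *\<^sub>R \<xi>2)))
                        (at (mat 1, mat 1))
                      (op_exp (\<lambda>\<zeta>. (- t / 2) *\<^sub>R pr_p X (ad (\<xi>1, \<xi>2) \<zeta>))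
                        (inv_into (pX X) (frechet_derivative (iota_pi X) (at (mat 1, mat 1))) V))))
           (\<lambda>t V. Phi (mexp (t *\<^sub>R \<xi>1), mexp (t *\<^sub>R \<xi>2))
                    (op_exp (\<lambda>W. (- t) *\<^sub>R PperpX X (f_op (\<xi>1, \<xi>2) W)) V))"
      by (rule rolling_gen[OF assms(4)], erule A_eq, rule C_eq)
  qed
qed


end
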